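(* Let $I\subset\mathbb{K}[x_1,\ldots,x_n]$ be a zero-dimensional ideal of degree $D$ in shape position, with reduced LEX Gröbner basis $[f_1(x_1),x_2-f_2(x_1),\ldots,x_n-f_n(x_1)]$. Let $T_1,\ldots,T_n$ be the multiplication matrices w.r.t. a Gröbner basis of $I$ for a term ordering $<_1$, with $T_1$ nonsingular, and let $\mathbf{e}=(1,0,\ldots,0)^t\in\mathbb{K}^D$. Let $\mathbf{w}\in\mathbb{K}^D$ be such that the minimal polynomial $\tilde f_1$ of the sequence $(\langle\mathbf{w},T_1^i\mathbf{e}\rangle)_{i=0}^{2D-1}$ is a proper factor of $f_1$ of degree $d<D$. For each $i=2,\ldots,n$, consider the linear system in the unknowns $y_0,\ldots,y_{d-1}$: $$\langle\mathbf{w},T_1^jT_i\mathbf{e}\rangle=\sum_{k=0}^{d-1}y_k\langle\mathbf{w},T_1^{k+j}\mathbf{e}\rangle,\qquad j=0,\ldots,d-1,$$ which has a unique solution $c_{i,0},\ldots,c_{i,d-1}$. Then $x_i-\sum_{k=0}^{d-1}c_{i,k}x_1^k$ belongs to the Gröbner basis of $I+\langle\tilde f_1\rangle$ w.r.t. LEX.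
   Context: Variables are ordered $x_1<\cdots<x_n$, and LEX is the lexicographic ordering with this variable order. $D=\dim_{\mathbb{K}}\mathbb{K}[x_1,\ldots,x_n]/I$. Let $B=[\epsilon_1,\ldots,\epsilon_D]$ be the canonical basis (standard monomials) of the quotient w.r.t. $<_1$, ordered increasingly, with $\epsilon_1=1$. $T_i$ is the $D\times D$ matrix whose $j$-th column is the coordinate vector of the normal form of $\epsilon_j x_i$. $\langle\cdot,\cdot\rangle$ is the standard inner product. *)

theory Defs
  imports "HOL-Library.Poly_Mapping" "HOL-Computational_Algebra.Polynomial" "Jordan_Normal_Form.Matrix"
begin

text \<open>Multivariate polynomials over a field: monomials are finitely supported exponent
  vectors (variable x_i has index i, i = 1..n), polynomials are finitely supported
  maps from monomials to coefficients (Poly_Mapping convolution gives the product).\<close>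

type_synonym mono = "nat \<Rightarrow>\<^sub>0 nat"
type_synonym 'a mpoly = "mono \<Rightarrow>\<^sub>0 'a"

definition Var :: "nat \<Rightarrow> 'a::comm_ring_1 mpoly" where
  "Var i = Poly_Mapping.single (Poly_Mapping.single i 1) 1"

definition Pn :: "nat \<Rightarrow> 'a::comm_ring_1 mpoly set" where
  "Pn n = {p. \<forall>m\<in>Poly_Mapping.keys p. Poly_Mapping.keys m \<subseteq> {1..n}}"

definition is_ideal :: "nat \<Rightarrow> 'a::comm_ring_1 mpoly set \<Rightarrow> bool" where
  "is_ideal n I \<longleftrightarrow> I \<subseteq> Pn n \<and> 0 \<in> I \<and> (\<forall>a\<in>I. \<forall>b\<in>I. a + b \<in> I)
     \<and> (\<forall>q\<in>Pn n. \<forall>a\<in>I. q * a \<in> I)"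

definition ideal_add :: "nat \<Rightarrow> 'a::comm_ring_1 mpoly set \<Rightarrow> 'a mpoly \<Rightarrow> 'a mpoly set" where
  "ideal_add n I p = {a + q * p | a q. a \<in> I \<and> q \<in> Pn n}"

definition term_order :: "nat \<Rightarrow> (mono \<Rightarrow> mono \<Rightarrow> bool) \<Rightarrow> bool" where
  "term_order n lt \<longleftrightarrow>
     (\<forall>a. \<not> lt a a) \<and> (\<forall>a b c. lt a b \<longrightarrow> lt b c \<longrightarrow> lt a c) \<and>
     (\<forall>a b. Poly_Mapping.keys a \<subseteq> {1..n} \<longrightarrow> Poly_Mapping.keys b \<subseteq> {1..n} \<longrightarrow> a = b \<or> lt a b \<or> lt b a) \<and>
     (\<forall>a. Poly_Mapping.keys a \<subseteq> {1..n} \<longrightarrow> a \<noteq> 0 \<longrightarrow> lt 0 a) \<and>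
     (\<forall>a b c. lt a b \<longrightarrow> lt (a + c) (b + c))"

text \<open>LEX with x_1 < ... < x_n: compare exponents of the largest variable first.\<close>
definition lex :: "mono \<Rightarrow> mono \<Rightarrow> bool" where
  "lex a b \<longleftrightarrow> (\<exists>k. Poly_Mapping.lookup a k < Poly_Mapping.lookup b k \<and> (\<forall>j>k. Poly_Mapping.lookup a j = Poly_Mapping.lookup b j))"

definition lm :: "(mono \<Rightarrow> mono \<Rightarrow> bool) \<Rightarrow> 'a::zero mpoly \<Rightarrow> mono" where
  "lm lt p = (THE m. m \<in> Poly_Mapping.keys p \<and> (\<forall>m'\<in>Poly_Mapping.keys p. m' \<noteq> m \<longrightarrow> lt m' m))"

definition lc :: "(mono \<Rightarrow> mono \<Rightarrow> bool) \<Rightarrow> 'a::zero mpoly \<Rightarrow> 'a" where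
  "lc lt p = Poly_Mapping.lookup p (lm lt p)"

definition mdvd :: "mono \<Rightarrow> mono \<Rightarrow> bool" where
  "mdvd a b \<longleftrightarrow> (\<forall>v. Poly_Mapping.lookup a v \<le> Poly_Mapping.lookup b v)"

definition is_GB :: "nat \<Rightarrow> (mono \<Rightarrow> mono \<Rightarrow> bool) \<Rightarrow> 'a::comm_ring_1 mpoly set \<Rightarrow> 'a mpoly set \<Rightarrow> bool" where
  "is_GB n lt I G \<longleftrightarrow> finite G \<and> G \<subseteq> I \<and>
     (\<forall>f\<in>I. f \<noteq> 0 \<longrightarrow> (\<exists>g\<in>G. g \<noteq> 0 \<and> mdvd (lm lt g) (lm lt f)))"

definition is_reduced_GB :: "nat \<Rightarrow> (mono \<Rightarrow> mono \<Rightarrow> bool) \<Rightarrow> 'a::comm_ring_1 mpoly set \<Rightarrow> 'a mpoly set \<Rightarrow> bool" where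
  "is_reduced_GB n lt I G \<longleftrightarrow> is_GB n lt I G \<and> 0 \<notin> G \<and> (\<forall>g\<in>G. lc lt g = 1) \<and>
     (\<forall>g\<in>G. \<forall>g'\<in>G - {g}. \<forall>m\<in>Poly_Mapping.keys g. \<not> mdvd (lm lt g') m)"

definition std_monos :: "nat \<Rightarrow> (mono \<Rightarrow> mono \<Rightarrow> bool) \<Rightarrow> 'a::comm_ring_1 mpoly set \<Rightarrow> mono set" where
  "std_monos n lt I = {m. Poly_Mapping.keys m \<subseteq> {1..n} \<and> (\<forall>f\<in>I. f \<noteq> 0 \<longrightarrow> lm lt f \<noteq> m)}"

definition canon_basis :: "nat \<Rightarrow> (mono \<Rightarrow> mono \<Rightarrow> bool) \<Rightarrow> 'a::comm_ring_1 mpoly set \<Rightarrow> mono list" where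
  "canon_basis n lt I = (THE xs. sorted_wrt lt xs \<and> set xs = std_monos n lt I)"

definition nf :: "nat \<Rightarrow> (mono \<Rightarrow> mono \<Rightarrow> bool) \<Rightarrow> 'a::comm_ring_1 mpoly set \<Rightarrow> 'a mpoly \<Rightarrow> 'a mpoly" where
  "nf n lt I p = (THE r. r \<in> Pn n \<and> p - r \<in> I \<and> Poly_Mapping.keys r \<subseteq> std_monos n lt I)"

text \<open>Multiplication matrix T_i: column j is the coordinate vector of NF(eps_j x_i) in B.\<close>
definition mult_mat :: "nat \<Rightarrow> (mono \<Rightarrow> mono \<Rightarrow> bool) \<Rightarrow> 'a::comm_ring_1 mpoly set \<Rightarrow> nat \<Rightarrow> 'a mat" where
  "mult_mat n lt I i = (let B = canon_basis n lt I in
     mat (length B) (length B)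
       (\<lambda>(k, j). Poly_Mapping.lookup (nf n lt I (Poly_Mapping.single (B ! j) 1 * Var i)) (B ! k)))"

definition uni :: "'a::comm_ring_1 poly \<Rightarrow> 'a mpoly" where
  "uni p = (\<Sum>k\<le>Polynomial.degree p. Poly_Mapping.single (Poly_Mapping.single 1 k) (coeff p k))"

definition annihilates :: "(nat \<Rightarrow> 'a::comm_ring_1) \<Rightarrow> nat \<Rightarrow> 'a poly \<Rightarrow> bool" where
  "annihilates a N P \<longleftrightarrow>
     (\<forall>j. j + Polynomial.degree P < N \<longrightarrow> (\<Sum>k\<le>Polynomial.degree P. coeff P k * a (k + j)) = 0)"

definition is_minpoly_seq :: "(nat \<Rightarrow> 'a::field) \<Rightarrow> nat \<Rightarrow> 'a poly \<Rightarrow> bool" where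
  "is_minpoly_seq a N P \<longleftrightarrow> lead_coeff P = 1 \<and> annihilates a N P \<and>
     (\<forall>Q. Q \<noteq> 0 \<longrightarrow> annihilates a N Q \<longrightarrow> Polynomial.degree P \<le> Polynomial.degree Q)"

end

theory Submission
  imports Defs "HOL-Library.Ramsey" "Jordan_Normal_Form.Char_Poly" "Jordan_Normal_Form.Determinant"
begin


section \<open>Basic polynomial facts\<close>

lemma keys_add_nat: "Poly_Mapping.keys (a + b :: 'x \<Rightarrow>\<^sub>0 nat) = Poly_Mapping.keys a \<union> Poly_Mapping.keys b"
  by (auto simp: in_keys_iff lookup_add)

lemma keys_diff_sub: "Poly_Mapping.keys (p - q :: 'x \<Rightarrow>\<^sub>0 'b::ab_group_add) \<subseteq> Poly_Mapping.keys p \<union> Poly_Mapping.keys q"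
  by (auto simp: in_keys_iff lookup_minus)

lemma lookup_single0_mult: "Poly_Mapping.lookup (Poly_Mapping.single 0 c * p) k = c * Poly_Mapping.lookup (p :: 'x::comm_monoid_add \<Rightarrow>\<^sub>0 'b::comm_semiring_1) k"
  by (simp add: mult_map_scale_conv_mult[symmetric] Poly_Mapping.map.rep_eq when_def)

lemma keys_single0_mult: "Poly_Mapping.keys (Poly_Mapping.single 0 c * p) \<subseteq> Poly_Mapping.keys (p :: 'x::comm_monoid_add \<Rightarrow>\<^sub>0 'b::comm_semiring_1)"
  by (auto simp: in_keys_iff lookup_single0_mult)

lemma sum_single_keys: "(\<Sum>m\<in>Poly_Mapping.keys p. Poly_Mapping.single m (Poly_Mapping.lookup p m)) = p"
proof (rule poly_mapping_eqI)
  fix k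
  show "Poly_Mapping.lookup (\<Sum>m\<in>Poly_Mapping.keys p. Poly_Mapping.single m (Poly_Mapping.lookup p m)) k = Poly_Mapping.lookup p k"
    by (simp add: lookup_sum lookup_single when_def in_keys_iff)
qed

lemma single_as_mult: "Poly_Mapping.single m c = Poly_Mapping.single 0 c * Poly_Mapping.single (m::'x::comm_monoid_add) (1::'b::comm_semiring_1)"
  by (simp add: mult_single)

lemma Pn_iff: "p \<in> Pn n \<longleftrightarrow> (\<forall>m\<in>Poly_Mapping.keys p. Poly_Mapping.keys m \<subseteq> {1..n})"
  by (simp add: Pn_def)

lemma Pn_0[simp]: "0 \<in> Pn n" by (simp add: Pn_def)

lemma Pn_add: "p \<in> Pn n \<Longrightarrow> q \<in> Pn n \<Longrightarrow> p + q \<in> Pn n"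
  using keys_add[of p q] by (auto simp: Pn_def)

lemma Pn_diff: "p \<in> Pn n \<Longrightarrow> q \<in> Pn n \<Longrightarrow> p - q \<in> Pn n"
  using keys_diff_sub[of p q] by (auto simp: Pn_def)

lemma Pn_uminus: "p \<in> Pn n \<Longrightarrow> - p \<in> Pn n"
  by (auto simp: Pn_def)

lemma Pn_mult: "p \<in> Pn n \<Longrightarrow> q \<in> Pn n \<Longrightarrow> p * q \<in> Pn n"
  using keys_mult[of p q] by (fastforce simp: Pn_def keys_add_nat)

lemma Pn_single: "Poly_Mapping.keys m \<subseteq> {1..n} \<Longrightarrow> Poly_Mapping.single m c \<in> Pn n"
  by (auto simp: Pn_def)

lemma Pn_single0: "Poly_Mapping.single 0 c \<in> Pn n"
  by (auto simp: Pn_def)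

lemma Pn_one[simp]: "1 \<in> Pn n"
  by (auto simp: Pn_def)

lemma Pn_sum: "(\<And>x. x \<in> A \<Longrightarrow> f x \<in> Pn n) \<Longrightarrow> sum f A \<in> Pn n"
  by (induction A rule: infinite_finite_induct) (auto intro: Pn_add)

lemma Pn_Var: "i \<in> {1..n} \<Longrightarrow> Var i \<in> Pn n"
  by (auto simp: Var_def Pn_def)

lemma Pn_power: "p \<in> Pn n \<Longrightarrow> p ^ k \<in> Pn n"
  by (induction k) (auto intro: Pn_mult)

lemma Pn_uni: "1 \<le> n \<Longrightarrow> uni P \<in> Pn n"
  unfolding uni_def by (rule Pn_sum) (auto simp: Pn_def)

section \<open>Ideals\<close>

lemma I_sub: "is_ideal n I \<Longrightarrow> a \<in> I \<Longrightarrow> a \<in> Pn n"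
  by (auto simp: is_ideal_def)
lemma I_0: "is_ideal n I \<Longrightarrow> 0 \<in> I"
  by (auto simp: is_ideal_def)
lemma I_add: "is_ideal n I \<Longrightarrow> a \<in> I \<Longrightarrow> b \<in> I \<Longrightarrow> a + b \<in> I"
  by (auto simp: is_ideal_def)
lemma I_mult: "is_ideal n I \<Longrightarrow> q \<in> Pn n \<Longrightarrow> a \<in> I \<Longrightarrow> q * a \<in> I"
  by (auto simp: is_ideal_def)
lemma I_mult2: "is_ideal n I \<Longrightarrow> q \<in> Pn n \<Longrightarrow> a \<in> I \<Longrightarrow> a * q \<in> I"
  by (metis I_mult mult.commute)
lemma I_uminus: "is_ideal n I \<Longrightarrow> a \<in> I \<Longrightarrow> - a \<in> I"
proof -
  assume "is_ideal n I" "a \<in> I"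
  then have "Poly_Mapping.single 0 (-1) * a \<in> I" by (intro I_mult Pn_single0)
  moreover have "Poly_Mapping.single 0 (-1) * a = - a"
    by (rule poly_mapping_eqI) (simp add: lookup_single0_mult)
  ultimately show ?thesis by simp
qed
lemma I_diff: "is_ideal n I \<Longrightarrow> a \<in> I \<Longrightarrow> b \<in> I \<Longrightarrow> a - b \<in> I"
  using I_add[of n I a "- b"] I_uminus by fastforce
lemma I_sum: "is_ideal n I \<Longrightarrow> (\<And>x. x \<in> A \<Longrightarrow> f x \<in> I) \<Longrightarrow> sum f A \<in> I"
  by (induction A rule: infinite_finite_induct) (auto intro: I_add I_0)

section \<open>Strict total orders and leading monomials\<close>

definition sto :: "'x set \<Rightarrow> ('x \<Rightarrow> 'x \<Rightarrow> bool) \<Rightarrow> bool" where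
  "sto A lt \<longleftrightarrow> (\<forall>a. \<not> lt a a) \<and> (\<forall>a b c. lt a b \<longrightarrow> lt b c \<longrightarrow> lt a c) \<and>
     (\<forall>a\<in>A. \<forall>b\<in>A. a = b \<or> lt a b \<or> lt b a)"

lemma sto_max:
  assumes "sto A lt" "finite X" "X \<noteq> {}" "X \<subseteq> A"
  shows "\<exists>m\<in>X. \<forall>m'\<in>X. m' \<noteq> m \<longrightarrow> lt m' m"
  using assms(2,3,4)
proof (induction X rule: finite_ne_induct)
  case (singleton x) then show ?case by auto
next
  case (insert x F)
  then obtain m where m: "m \<in> F" "\<forall>m'\<in>F. m' \<noteq> m \<longrightarrow> lt m' m" by auto
  have xA: "x \<in> A" "m \<in> A" using insert m by auto
  show ?case
  proof (cases "lt m x")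
    case True
    have tr: "\<And>a b c. lt a b \<Longrightarrow> lt b c \<Longrightarrow> lt a c" using assms(1) unfolding sto_def by blast
    have "\<forall>m'\<in>insert x F. m' \<noteq> x \<longrightarrow> lt m' x"
    proof (intro ballI impI)
      fix m' assume "m' \<in> insert x F" "m' \<noteq> x"
      then have "m' \<in> F" by auto
      then show "lt m' x" using m True tr by (cases "m' = m") auto
    qed
    then show ?thesis by auto
  next
    case False
    then have "x = m \<or> lt x m" using assms(1) xA unfolding sto_def by blast
    then show ?thesis using m by auto
  qed
qed

lemma lm_eq:
  assumes "sto A lt" "m \<in> Poly_Mapping.keys p" "\<forall>m'\<in>Poly_Mapping.keys p. m' \<noteq> m \<longrightarrow> lt m' m"
  shows "lm lt p = m"
  unfolding lm_def
proof (rule the_equality)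
  show "m \<in> Poly_Mapping.keys p \<and> (\<forall>m'\<in>Poly_Mapping.keys p. m' \<noteq> m \<longrightarrow> lt m' m)" using assms by auto
next
  fix m2 assume "m2 \<in> Poly_Mapping.keys p \<and> (\<forall>m'\<in>Poly_Mapping.keys p. m' \<noteq> m2 \<longrightarrow> lt m' m2)"
  then have h: "m2 \<in> Poly_Mapping.keys p" "\<forall>m'\<in>Poly_Mapping.keys p. m' \<noteq> m2 \<longrightarrow> lt m' m2" by auto
  show "m2 = m"
  proof (rule ccontr)
    assume ne: "m2 \<noteq> m"
    then have "lt m m2" "lt m2 m" using h assms(2,3) by auto
    then show False using assms(1) unfolding sto_def by blast
  qed
qed

lemma lm_props:
  assumes "sto A lt" "p \<noteq> 0" "Poly_Mapping.keys p \<subseteq> A"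
  shows "lm lt p \<in> Poly_Mapping.keys p" "\<forall>m'\<in>Poly_Mapping.keys p. m' \<noteq> lm lt p \<longrightarrow> lt m' (lm lt p)"
proof -
  obtain m where m: "m \<in> Poly_Mapping.keys p" "\<forall>m'\<in>Poly_Mapping.keys p. m' \<noteq> m \<longrightarrow> lt m' m"
    using sto_max[OF assms(1) finite_keys _ assms(3)] assms(2) by auto
  then have "lm lt p = m" using lm_eq[OF assms(1)] by blast
  then show "lm lt p \<in> Poly_Mapping.keys p" "\<forall>m'\<in>Poly_Mapping.keys p. m' \<noteq> lm lt p \<longrightarrow> lt m' (lm lt p)"
    using m by auto
qed

lemma sto_lex: "sto UNIV lex"
  unfolding sto_def
proof (intro conjI allI impI ballI)
  fix a show "\<not> lex a a" by (auto simp: lex_def)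
next
  fix a b c assume ab: "lex a b" and bc: "lex b c"
  then obtain k1 k2 where 1: "Poly_Mapping.lookup a k1 < Poly_Mapping.lookup b k1" "\<forall>j>k1. Poly_Mapping.lookup a j = Poly_Mapping.lookup b j"
    and 2: "Poly_Mapping.lookup b k2 < Poly_Mapping.lookup c k2" "\<forall>j>k2. Poly_Mapping.lookup b j = Poly_Mapping.lookup c j"
    by (auto simp: lex_def)
  show "lex a c" unfolding lex_def
  proof (cases "k1 < k2")
    case True then show "\<exists>k. Poly_Mapping.lookup a k < Poly_Mapping.lookup c k \<and> (\<forall>j>k. Poly_Mapping.lookup a j = Poly_Mapping.lookup c j)"
      using 1 2 by (intro exI[of _ k2]) auto
  next
    case False
    have "Poly_Mapping.lookup a k1 < Poly_Mapping.lookup c k1"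
    proof (cases "k1 = k2")
      case True then show ?thesis using 1 2 by simp
    next
      case False then have "k2 < k1" using \<open>\<not> k1 < k2\<close> by simp
      then show ?thesis using 1 2 by simp
    qed
    moreover have "\<forall>j>k1. Poly_Mapping.lookup a j = Poly_Mapping.lookup c j"
      using 1 2 False by simp
    ultimately show "\<exists>k. Poly_Mapping.lookup a k < Poly_Mapping.lookup c k \<and> (\<forall>j>k. Poly_Mapping.lookup a j = Poly_Mapping.lookup c j)"
      by blast
  qed
next
  fix a b :: mono
  show "a = b \<or> lex a b \<or> lex b a"
  proof (cases "a = b")
    case False
    let ?K = "{k. Poly_Mapping.lookup a k \<noteq> Poly_Mapping.lookup b k}"
    have fin: "finite ?K"
      by (rule finite_subset[of _ "Poly_Mapping.keys a \<union> Poly_Mapping.keys b"]) (auto simp: in_keys_iff)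
    have ne: "?K \<noteq> {}"
    proof
      assume "?K = {}" then have "a = b" by (intro poly_mapping_eqI) auto
      with False show False by simp
    qed
    define k where "k = Max ?K"
    have kK: "k \<in> ?K" using Max_in[OF fin ne] unfolding k_def .
    have above: "\<forall>j>k. Poly_Mapping.lookup a j = Poly_Mapping.lookup b j"
    proof (intro allI impI)
      fix j assume "k < j"
      show "Poly_Mapping.lookup a j = Poly_Mapping.lookup b j"
      proof (rule ccontr)
        assume "Poly_Mapping.lookup a j \<noteq> Poly_Mapping.lookup b j"
        then have "j \<le> k" using Max_ge[OF fin, of j] k_def by simp
        then show False using \<open>k < j\<close> by simp
      qed
    qed
    show ?thesis
    proof (cases "Poly_Mapping.lookup a k < Poly_Mapping.lookup b k")
      case True then show ?thesis using above by (auto simp: lex_def)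
    next
      case False then have "Poly_Mapping.lookup b k < Poly_Mapping.lookup a k" using kK by auto
      then show ?thesis using above by (auto simp: lex_def)
    qed
  qed simp
qed

lemma sto_term_order: "term_order n lt \<Longrightarrow> sto {m. Poly_Mapping.keys m \<subseteq> {1..n}} lt"
  unfolding term_order_def sto_def by blast




lemma sum_single_keys': "(\<Sum>m\<in>Poly_Mapping.keys p. Poly_Mapping.single 0 (Poly_Mapping.lookup p m) * Poly_Mapping.single m (1::'b::comm_semiring_1)) = (p :: 'x::comm_monoid_add \<Rightarrow>\<^sub>0 'b)"
  using sum_single_keys[of p] by (simp add: mult_single)

locale setup1 =
  fixes n :: nat and lt1 :: "mono \<Rightarrow> mono \<Rightarrow> bool" and I :: "'a::field mpoly set"
  assumes ideal: "is_ideal n I" and tord: "term_order n lt1" and finS: "finite (std_monos n lt1 I)"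
begin

abbreviation "S \<equiv> std_monos n lt1 I"
abbreviation "Mn \<equiv> {m::mono. Poly_Mapping.keys m \<subseteq> {1..n}}"
abbreviation "NF \<equiv> nf n lt1 I"

lemma sto1: "sto Mn lt1" using sto_term_order[OF tord] .

lemma tparts: "(\<forall>a. \<not> lt1 a a)" "(\<forall>a b c. lt1 a b \<longrightarrow> lt1 b c \<longrightarrow> lt1 a c)"
     "(\<forall>a. Poly_Mapping.keys a \<subseteq> {1..n} \<longrightarrow> a \<noteq> 0 \<longrightarrow> lt1 0 a)"
     "(\<forall>a b c. lt1 a b \<longrightarrow> lt1 (a + c) (b + c))"
  using tord by (simp_all add: term_order_def)

lemma lt1_irrefl: "\<not> lt1 a a" using tparts(1) by simp
lemma lt1_trans: "lt1 a b \<Longrightarrow> lt1 b c \<Longrightarrow> lt1 a c" using tparts(2) by simp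
lemma lt1_0: "Poly_Mapping.keys a \<subseteq> {1..n} \<Longrightarrow> a \<noteq> 0 \<Longrightarrow> lt1 0 a" using tparts(3) by simp
lemma lt1_add: "lt1 a b \<Longrightarrow> lt1 (a + c) (b + c)" using tparts(4) by simp

lemma lt1_coord:
  assumes a: "Poly_Mapping.keys a \<subseteq> {1..n}" and b: "Poly_Mapping.keys b \<subseteq> {1..n}" and lt: "lt1 b a"
  shows "\<exists>v<n. Poly_Mapping.lookup b (Suc v) < Poly_Mapping.lookup a (Suc v)"
proof (rule ccontr)
  assume nt: "\<not> ?thesis"
  have le: "Poly_Mapping.lookup a v \<le> Poly_Mapping.lookup b v" if "v \<in> {1..n}" for v
  proof -
    have "v = Suc (v - 1)" "v - 1 < n" using that by auto
    moreover from nt have "\<not> (Poly_Mapping.lookup b (Suc (v-1)) < Poly_Mapping.lookup a (Suc (v-1)))"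
      using \<open>v - 1 < n\<close> by blast
    ultimately show ?thesis by simp
  qed
  define c where "c = b - a"
  have bac: "b = c + a"
  proof (rule poly_mapping_eqI)
    fix v show "Poly_Mapping.lookup b v = Poly_Mapping.lookup (c + a) v"
    proof (cases "v \<in> {1..n}")
      case True then show ?thesis using le[OF True] by (simp add: c_def lookup_add lookup_minus)
    next
      case False then have "Poly_Mapping.lookup a v = 0" using a by (auto simp: in_keys_iff)
      then show ?thesis by (simp add: c_def lookup_add lookup_minus)
    qed
  qed
  have ck: "Poly_Mapping.keys c \<subseteq> {1..n}"
  proof
    fix v assume "v \<in> Poly_Mapping.keys c"
    then have "Poly_Mapping.lookup b v \<noteq> 0" by (auto simp: c_def in_keys_iff lookup_minus)
    then have "v \<in> Poly_Mapping.keys b" by (simp add: in_keys_iff)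
    then show "v \<in> {1..n}" using b by blast
  qed
  show False
  proof (cases "c = 0")
    case True then show False using bac lt lt1_irrefl by simp
  next
    case False
    then have "lt1 (0 + a) (c + a)" using lt1_0[OF ck] lt1_add by blast
    then have "lt1 a b" using bac by simp
    then show False using lt lt1_trans lt1_irrefl by blast
  qed
qed

definition "R1 = {(b,a). lt1 b a \<and> Poly_Mapping.keys a \<subseteq> {1..n} \<and> Poly_Mapping.keys b \<subseteq> {1..n}}"

lemma wf_R1: "wf R1"
proof (rule trans_disj_wf_implies_wf)
  show "trans R1" unfolding R1_def trans_def using lt1_trans by blast
  show "disj_wf R1" unfolding disj_wf
  proof (intro exI[of _ "\<lambda>i. measure (\<lambda>m. Poly_Mapping.lookup m (Suc i))"] exI[of _ n] conjI)
    show "\<forall>i<n. wf (measure (\<lambda>m. Poly_Mapping.lookup m (Suc i)))" by simp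
    show "R1 \<subseteq> (\<Union>i<n. measure (\<lambda>m. Poly_Mapping.lookup m (Suc i)))"
    proof
      fix x assume "x \<in> R1"
      then obtain b a where x: "x = (b, a)" "lt1 b a" "Poly_Mapping.keys a \<subseteq> {1..n}" "Poly_Mapping.keys b \<subseteq> {1..n}"
        by (auto simp: R1_def)
      then obtain v where "v < n" "Poly_Mapping.lookup b (Suc v) < Poly_Mapping.lookup a (Suc v)"
        using lt1_coord by blast
      then show "x \<in> (\<Union>i<n. measure (\<lambda>m. Poly_Mapping.lookup m (Suc i)))" using x by auto
    qed
  qed
qed

definition Rep :: "'a mpoly \<Rightarrow> bool" where
  "Rep p \<longleftrightarrow> (\<exists>r. r \<in> Pn n \<and> p - r \<in> I \<and> Poly_Mapping.keys r \<subseteq> S)"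

lemma Rep_add: assumes "Rep p" "Rep q" shows "Rep (p + q)"
proof -
  obtain r1 r2 where r: "r1 \<in> Pn n" "p - r1 \<in> I" "Poly_Mapping.keys r1 \<subseteq> S"
    "r2 \<in> Pn n" "q - r2 \<in> I" "Poly_Mapping.keys r2 \<subseteq> S" using assms unfolding Rep_def by blast
  have eq: "(p + q) - (r1 + r2) = (p - r1) + (q - r2)" by (simp add: algebra_simps)
  have "(p + q) - (r1 + r2) \<in> I" by (subst eq) (rule I_add[OF ideal r(2) r(5)])
  moreover have "Poly_Mapping.keys (r1 + r2) \<subseteq> S" using keys_add[of r1 r2] r by auto
  ultimately show ?thesis unfolding Rep_def using Pn_add[OF r(1) r(4)] by blast
qed

lemma Rep_smult: assumes "Rep p" shows "Rep (Poly_Mapping.single 0 c * p)"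
proof -
  obtain r where r: "r \<in> Pn n" "p - r \<in> I" "Poly_Mapping.keys r \<subseteq> S" using assms unfolding Rep_def by blast
  have "Poly_Mapping.single 0 c * p - Poly_Mapping.single 0 c * r = Poly_Mapping.single 0 c * (p - r)"
    by (simp add: algebra_simps)
  then have "Poly_Mapping.single 0 c * p - Poly_Mapping.single 0 c * r \<in> I"
    using I_mult[OF ideal Pn_single0 r(2)] by simp
  moreover have "Poly_Mapping.keys (Poly_Mapping.single 0 c * r) \<subseteq> S" using keys_single0_mult[of c r] r by auto
  ultimately show ?thesis unfolding Rep_def using Pn_mult[OF Pn_single0 r(1)] by blast
qed

lemma Rep_I: "a \<in> I \<Longrightarrow> Rep a"
  unfolding Rep_def by (intro exI[of _ 0]) auto

lemma Rep_sum: "(\<And>x. x \<in> A \<Longrightarrow> Rep (f x)) \<Longrightarrow> Rep (sum f A)"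
  by (induction A rule: infinite_finite_induct) (auto intro: Rep_add Rep_I I_0[OF ideal])

lemma Rep_std: "m \<in> S \<Longrightarrow> Rep (Poly_Mapping.single m 1)"
proof -
  assume "m \<in> S"
  then have mk: "Poly_Mapping.keys m \<subseteq> {1..n}" by (simp add: std_monos_def)
  show ?thesis unfolding Rep_def
    by (intro exI[of _ "Poly_Mapping.single m 1"]) (use \<open>m \<in> S\<close> Pn_single[OF mk] I_0[OF ideal] in auto)
qed

lemma Rep_mono_aux: "Poly_Mapping.keys m \<subseteq> {1..n} \<longrightarrow> Rep (Poly_Mapping.single m 1)"
proof (induction m rule: wf_induct_rule[OF wf_R1])
  case (1 m)
  show ?case
  proof
    assume mk: "Poly_Mapping.keys m \<subseteq> {1..n}"
    show "Rep (Poly_Mapping.single m 1)"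
    proof (cases "m \<in> S")
      case True then show ?thesis by (rule Rep_std)
    next
      case False
      then obtain f where f: "f \<in> I" "f \<noteq> 0" "lm lt1 f = m" using mk by (auto simp: std_monos_def)
      have fP: "f \<in> Pn n" using I_sub[OF ideal f(1)] .
      have keysf: "Poly_Mapping.keys f \<subseteq> Mn" using fP by (auto simp: Pn_def)
      have mkf: "m \<in> Poly_Mapping.keys f" and below: "\<forall>m'\<in>Poly_Mapping.keys f. m' \<noteq> m \<longrightarrow> lt1 m' m"
        using lm_props[OF sto1 f(2) keysf] f(3) by auto
      define c where "c = Poly_Mapping.lookup f m"
      have c0: "c \<noteq> 0" using mkf by (simp add: c_def in_keys_iff)
      define g where "g = Poly_Mapping.single 0 (1/c) * f"
      have gI: "g \<in> I" using I_mult[OF ideal Pn_single0 f(1)] by (simp add: g_def)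
      define h where "h = Poly_Mapping.single m 1 - g"
      have hk: "Poly_Mapping.keys h \<subseteq> Poly_Mapping.keys f - {m}"
      proof
        fix x assume "x \<in> Poly_Mapping.keys h"
        then have "Poly_Mapping.lookup h x \<noteq> 0" by (simp add: in_keys_iff)
        then show "x \<in> Poly_Mapping.keys f - {m}" using c0
          by (auto simp: h_def g_def lookup_minus lookup_single0_mult lookup_single in_keys_iff c_def when_def split: if_splits)
      qed
      have "Rep h"
      proof -
        have "Rep (\<Sum>m'\<in>Poly_Mapping.keys h. Poly_Mapping.single 0 (Poly_Mapping.lookup h m') * Poly_Mapping.single m' 1)"
        proof (rule Rep_sum, rule Rep_smult)
          fix m' assume m': "m' \<in> Poly_Mapping.keys h"
          then have "(m', m) \<in> R1" using hk below keysf mk by (auto simp: R1_def)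
          moreover have "Poly_Mapping.keys m' \<subseteq> {1..n}" using m' hk keysf by auto
          ultimately show "Rep (Poly_Mapping.single m' 1)" using 1 by blast
        qed
        then show ?thesis by (simp only: sum_single_keys')
      qed
      moreover have "Poly_Mapping.single m 1 = h + g" by (simp add: h_def)
      ultimately show ?thesis using Rep_add Rep_I gI by metis
    qed
  qed
qed

lemma Rep_all: assumes "p \<in> Pn n" shows "Rep p"
proof -
  have "Rep (\<Sum>m\<in>Poly_Mapping.keys p. Poly_Mapping.single 0 (Poly_Mapping.lookup p m) * Poly_Mapping.single m 1)"
    using assms Rep_mono_aux by (intro Rep_sum Rep_smult) (auto simp: Pn_def)
  then show ?thesis by (simp only: sum_single_keys')
qed

lemma nf_unique_core:
  assumes "r1 \<in> Pn n" "r2 \<in> Pn n" "r1 - r2 \<in> I" "Poly_Mapping.keys r1 \<subseteq> S" "Poly_Mapping.keys r2 \<subseteq> S"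
  shows "r1 = r2"
proof (rule ccontr)
  assume ne: "r1 \<noteq> r2"
  let ?h = "r1 - r2"
  have h0: "?h \<noteq> 0" using ne by simp
  have kh: "Poly_Mapping.keys ?h \<subseteq> S" using keys_diff_sub[of r1 r2] assms by auto
  have "Poly_Mapping.keys ?h \<subseteq> Mn" using Pn_diff[OF assms(1,2)] by (auto simp: Pn_def)
  then have "lm lt1 ?h \<in> Poly_Mapping.keys ?h" using lm_props[OF sto1 h0] by blast
  then have "lm lt1 ?h \<in> S" using kh by auto
  then show False using assms(3) h0 by (auto simp: std_monos_def)
qed

lemma nf_ex1: assumes "p \<in> Pn n" shows "\<exists>!r. r \<in> Pn n \<and> p - r \<in> I \<and> Poly_Mapping.keys r \<subseteq> S"
proof -
  obtain r where r: "r \<in> Pn n \<and> p - r \<in> I \<and> Poly_Mapping.keys r \<subseteq> S" using Rep_all[OF assms] unfolding Rep_def by blast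
  show ?thesis
  proof (rule ex1I[of _ r])
    show "r \<in> Pn n \<and> p - r \<in> I \<and> Poly_Mapping.keys r \<subseteq> S" using r .
    fix r2 assume r2: "r2 \<in> Pn n \<and> p - r2 \<in> I \<and> Poly_Mapping.keys r2 \<subseteq> S"
    have "r2 - r = (p - r) - (p - r2)" by (simp add: algebra_simps)
    then have "r2 - r \<in> I" using I_diff[OF ideal] r r2 by metis
    then show "r2 = r" using nf_unique_core r r2 by blast
  qed
qed

lemma nf_props: assumes "p \<in> Pn n"
  shows "NF p \<in> Pn n" "p - NF p \<in> I" "Poly_Mapping.keys (NF p) \<subseteq> S"
  using theI'[OF nf_ex1[OF assms]] unfolding nf_def by auto

lemma nf_eqI: assumes "p \<in> Pn n" "r \<in> Pn n" "p - r \<in> I" "Poly_Mapping.keys r \<subseteq> S"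
  shows "NF p = r"
  unfolding nf_def by (rule the1_equality[OF nf_ex1[OF assms(1)]]) (use assms in auto)

lemma nf_add: assumes "p \<in> Pn n" "q \<in> Pn n" shows "NF (p + q) = NF p + NF q"
proof (rule nf_eqI)
  show "p + q \<in> Pn n" using Pn_add assms .
  show "NF p + NF q \<in> Pn n" using Pn_add nf_props assms by blast
  have "p + q - (NF p + NF q) = (p - NF p) + (q - NF q)" by (simp add: algebra_simps)
  then show "p + q - (NF p + NF q) \<in> I" using I_add[OF ideal] nf_props assms by metis
  show "Poly_Mapping.keys (NF p + NF q) \<subseteq> S" using keys_add[of "NF p" "NF q"] nf_props assms by blast
qed

lemma nf_smult: assumes "p \<in> Pn n" shows "NF (Poly_Mapping.single 0 c * p) = Poly_Mapping.single 0 c * NF p"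
proof (rule nf_eqI)
  show "Poly_Mapping.single 0 c * p \<in> Pn n" using Pn_mult Pn_single0 assms by blast
  show "Poly_Mapping.single 0 c * NF p \<in> Pn n" using Pn_mult Pn_single0 nf_props assms by blast
  have "Poly_Mapping.single 0 c * p - Poly_Mapping.single 0 c * NF p = Poly_Mapping.single 0 c * (p - NF p)"
    by (simp add: algebra_simps)
  then show "Poly_Mapping.single 0 c * p - Poly_Mapping.single 0 c * NF p \<in> I"
    using I_mult[OF ideal Pn_single0] nf_props assms by metis
  show "Poly_Mapping.keys (Poly_Mapping.single 0 c * NF p) \<subseteq> S" using keys_single0_mult nf_props assms by blast
qed

lemma nf_I: assumes "a \<in> I" shows "NF a = 0"
  by (rule nf_eqI) (use assms I_sub[OF ideal] in auto)

lemma nf_id: assumes "r \<in> Pn n" "Poly_Mapping.keys r \<subseteq> S" shows "NF r = r"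
  by (rule nf_eqI) (use assms I_0[OF ideal] in auto)

lemma nf_mult_nf: assumes "q \<in> Pn n" "p \<in> Pn n" shows "NF (q * NF p) = NF (q * p)"
proof -
  have qn: "q * NF p \<in> Pn n" using Pn_mult assms nf_props by blast
  show ?thesis
  proof (rule sym, rule nf_eqI)
    show "q * p \<in> Pn n" using Pn_mult assms by blast
    show "NF (q * NF p) \<in> Pn n" using nf_props qn by blast
    have eq: "q * p - NF (q * NF p) = q * (p - NF p) + (q * NF p - NF (q * NF p))" by (simp add: algebra_simps)
    show "q * p - NF (q * NF p) \<in> I"
      by (subst eq) (rule I_add[OF ideal I_mult[OF ideal assms(1) nf_props(2)[OF assms(2)]] nf_props(2)[OF qn]])
    show "Poly_Mapping.keys (NF (q * NF p)) \<subseteq> S" using nf_props qn by blast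
  qed
qed

lemma nf_sum: "(\<And>x. x \<in> A \<Longrightarrow> f x \<in> Pn n) \<Longrightarrow> NF (sum f A) = (\<Sum>x\<in>A. NF (f x))"
proof (induction A rule: infinite_finite_induct)
  case (infinite A) then show ?case using nf_I[OF I_0[OF ideal]] by simp
next
  case empty then show ?case using nf_I[OF I_0[OF ideal]] by simp
next
  case (insert x F) then show ?case by (simp add: nf_add Pn_sum)
qed

end



lemma sorted_insert_ex:
  assumes "sto A lt" "sorted_wrt lt xs" "set xs \<subseteq> A" "x \<in> A" "x \<notin> set xs"
  shows "\<exists>ys. sorted_wrt lt ys \<and> set ys = insert x (set xs)"
  using assms(2-5)
proof (induction xs)
  case Nil then show ?case by (intro exI[of _ "[x]"]) simp
next
  case (Cons y ys)
  have tr: "\<And>a b c. lt a b \<Longrightarrow> lt b c \<Longrightarrow> lt a c" using assms(1) unfolding sto_def by blast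
  have tot: "x = y \<or> lt x y \<or> lt y x" using assms(1) Cons.prems unfolding sto_def by auto
  show ?case
  proof (cases "lt x y")
    case True
    then have "sorted_wrt lt (x # y # ys)" using Cons.prems(1) tr by auto
    then show ?thesis by (intro exI[of _ "x # y # ys"]) auto
  next
    case False
    then have lyx: "lt y x" using tot Cons.prems(4) by auto
    obtain zs where zs: "sorted_wrt lt zs" "set zs = insert x (set ys)" using Cons by auto
    have "sorted_wrt lt (y # zs)" using zs Cons.prems(1) lyx by auto
    then show ?thesis using zs by (intro exI[of _ "y # zs"]) auto
  qed
qed

lemma sorted_ex:
  assumes "sto A lt" "finite X" "X \<subseteq> A"
  shows "\<exists>xs. sorted_wrt lt xs \<and> set xs = X"
  using assms(2,3)
proof (induction X rule: finite_induct)
  case empty then show ?case by (intro exI[of _ "[]"]) simp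
next
  case (insert x F)
  then obtain xs where "sorted_wrt lt xs" "set xs = F" by auto
  then show ?case using sorted_insert_ex[OF assms(1), of xs x] insert by auto
qed

lemma sorted_unique:
  assumes "sto A lt"
  shows "sorted_wrt lt xs \<Longrightarrow> sorted_wrt lt ys \<Longrightarrow> set xs = set ys \<Longrightarrow> xs = ys"
proof (induction xs arbitrary: ys)
  case Nil then show ?case by simp
next
  case (Cons x xs)
  then obtain y ys' where ys: "ys = y # ys'" by (cases ys) auto
  have irr: "\<And>a. \<not> lt a a" and tr: "\<And>a b c. lt a b \<Longrightarrow> lt b c \<Longrightarrow> lt a c"
    using assms unfolding sto_def by blast+
  have xy: "x = y"
  proof (rule ccontr)
    assume "x \<noteq> y"
    then have "x \<in> set ys'" "y \<in> set xs" using Cons.prems ys by (auto simp: set_eq_iff)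
    then have "lt y x" "lt x y" using Cons.prems ys by auto
    then show False using irr tr by blast
  qed
  have "x \<notin> set xs" using Cons.prems(1) irr by auto
  moreover have "y \<notin> set ys'" using Cons.prems(2) ys irr by auto
  ultimately have "set xs = set ys'" using Cons.prems(3) ys xy by (auto simp: set_eq_iff)
  then show ?case using Cons.IH Cons.prems ys xy by auto
qed

lemma sorted_distinct_irr: "(\<And>a. \<not> lt a a) \<Longrightarrow> sorted_wrt lt xs \<Longrightarrow> distinct xs"
  by (induction xs) auto

context setup1
begin

definition "B = canon_basis n lt1 I"

lemma B_props: "sorted_wrt lt1 B" "set B = S"
proof -
  have SA: "S \<subseteq> Mn" by (auto simp: std_monos_def)
  obtain xs where xs: "sorted_wrt lt1 xs" "set xs = S" using sorted_ex[OF sto1 finS SA] by blast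
  have "B = xs" unfolding B_def canon_basis_def
    by (rule the_equality) (use xs sorted_unique[OF sto1] in auto)
  then show "sorted_wrt lt1 B" "set B = S" using xs by auto
qed

lemma B_distinct: "distinct B"
  using sorted_distinct_irr[OF lt1_irrefl B_props(1)] .

lemma B_length: "length B = card S"
  using distinct_card[OF B_distinct] B_props(2) by simp

lemma S_mono: "m \<in> S \<Longrightarrow> Poly_Mapping.keys m \<subseteq> {1..n}"
  by (simp add: std_monos_def)

lemma zero_in_S: assumes "0 < card S" shows "0 \<in> S"
proof (rule ccontr)
  assume n0: "0 \<notin> S"
  from assms obtain m where m: "m \<in> S" by (metis card_gt_0_iff ex_in_conv)
  obtain f where f: "f \<in> I" "f \<noteq> 0" "lm lt1 f = 0" using n0 by (auto simp: std_monos_def)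
  have keysf: "Poly_Mapping.keys f \<subseteq> Mn" using I_sub[OF ideal f(1)] by (auto simp: Pn_def)
  have k0: "0 \<in> Poly_Mapping.keys f" and bel: "\<forall>m'\<in>Poly_Mapping.keys f. m' \<noteq> 0 \<longrightarrow> lt1 m' 0"
    using lm_props[OF sto1 f(2) keysf] f(3) by auto
  have only0: "m' = 0" if "m' \<in> Poly_Mapping.keys f" for m'
  proof (rule ccontr)
    assume "m' \<noteq> 0"
    then have "lt1 m' 0" "lt1 0 m'" using bel that keysf lt1_0 by auto
    then show False using lt1_trans lt1_irrefl by blast
  qed
  define c where "c = Poly_Mapping.lookup f 0"
  have c0: "c \<noteq> 0" using k0 by (simp add: c_def in_keys_iff)
  have fc: "f = Poly_Mapping.single 0 c"
  proof (rule poly_mapping_eqI)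
    fix k show "Poly_Mapping.lookup f k = Poly_Mapping.lookup (Poly_Mapping.single 0 c) k"
      using only0[of k] by (cases "k = 0") (auto simp: c_def lookup_single in_keys_iff)
  qed
  have mk: "Poly_Mapping.keys m \<subseteq> {1..n}" using S_mono[OF m] .
  have "Poly_Mapping.single m (1/c) * f \<in> I" using I_mult[OF ideal Pn_single[OF mk] f(1)] .
  moreover have "Poly_Mapping.single m (1/c) * f = Poly_Mapping.single m 1" using c0 by (simp add: fc mult_single)
  ultimately have mI: "Poly_Mapping.single m (1::'a) \<in> I" by simp
  have "lm lt1 (Poly_Mapping.single m (1::'a)) = m" by (rule lm_eq[OF sto1]) auto
  moreover have ne: "Poly_Mapping.single m (1::'a) \<noteq> 0" by (metis lookup_single_eq lookup_zero one_neq_zero)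
  ultimately show False using m mI unfolding std_monos_def by blast
qed

lemma B0: assumes "0 < card S" shows "B ! 0 = 0"
proof -
  have z: "0 \<in> set B" using zero_in_S[OF assms] B_props(2) by simp
  then obtain y ys where B: "B = y # ys" by (cases B) auto
  have yS: "y \<in> S" using B B_props(2) by auto
  show ?thesis
  proof (rule ccontr)
    assume "B ! 0 \<noteq> 0"
    then have "y \<noteq> 0" using B by simp
    then have "0 \<in> set ys" using z B by auto
    then have "lt1 y 0" using B_props(1) B by auto
    moreover have "lt1 0 y" using lt1_0[OF S_mono[OF yS] \<open>y \<noteq> 0\<close>] .
    ultimately show False using lt1_trans lt1_irrefl by blast
  qed
qed

lemma sumB: "(\<Sum>j<length B. g (B ! j)) = (\<Sum>m\<in>S. g m)"
  using sum.reindex_bij_betw[OF bij_betw_nth[OF B_distinct refl refl], of g] B_props(2) by simp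

lemma rep_B: fixes r :: "'a mpoly" assumes "Poly_Mapping.keys r \<subseteq> S"
  shows "(\<Sum>j<length B. Poly_Mapping.single 0 (Poly_Mapping.lookup r (B ! j)) * Poly_Mapping.single (B ! j) 1) = r"
proof -
  have "(\<Sum>j<length B. Poly_Mapping.single 0 (Poly_Mapping.lookup r (B ! j)) * Poly_Mapping.single (B ! j) 1)
      = (\<Sum>m\<in>S. Poly_Mapping.single 0 (Poly_Mapping.lookup r m) * Poly_Mapping.single m (1::'a))"
    by (rule sumB)
  also have "\<dots> = (\<Sum>m\<in>Poly_Mapping.keys r. Poly_Mapping.single 0 (Poly_Mapping.lookup r m) * Poly_Mapping.single m (1::'a))"
    by (rule sum.mono_neutral_right[OF finS assms]) (auto simp: in_keys_iff)
  also have "\<dots> = r" by (rule sum_single_keys')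
  finally show ?thesis .
qed

definition crd :: "'a mpoly \<Rightarrow> 'a vec" where
  "crd p = vec (length B) (\<lambda>k. Poly_Mapping.lookup (NF p) (B ! k))"

lemma mult_mat_alt: "mult_mat n lt1 I i = mat (length B) (length B) (\<lambda>(k, j). Poly_Mapping.lookup (NF (Poly_Mapping.single (B ! j) 1 * Var i)) (B ! k))"
  unfolding mult_mat_def Let_def B_def ..

lemma mult_mat_carrier: "mult_mat n lt1 I i \<in> carrier_mat (length B) (length B)"
  unfolding mult_mat_alt by simp

lemma crd_carrier: "crd p \<in> carrier_vec (length B)"
  unfolding crd_def by simp

lemma mult_mat_crd: assumes i: "i \<in> {1..n}" and p: "p \<in> Pn n"
  shows "mult_mat n lt1 I i *\<^sub>v crd p = crd (Var i * p)"
proof (rule eq_vecI)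
  show "dim_vec (mult_mat n lt1 I i *\<^sub>v crd p) = dim_vec (crd (Var i * p))"
    by (simp add: mult_mat_alt crd_def)
  fix k assume "k < dim_vec (crd (Var i * p))"
  then have k: "k < length B" by (simp add: crd_def)
  let ?r = "NF p"
  have rP: "?r \<in> Pn n" and rS: "Poly_Mapping.keys ?r \<subseteq> S" using nf_props[OF p] by auto
  have BP: "Poly_Mapping.single (B ! j) 1 \<in> Pn n" if "j < length B" for j
  proof -
    have "B ! j \<in> S" using that B_props(2) nth_mem by blast
    then show ?thesis using Pn_single[OF S_mono] by blast
  qed
  have BPV: "Poly_Mapping.single (B ! j) 1 * Var i \<in> Pn n" if "j < length B" for j
    using Pn_mult[OF BP[OF that] Pn_Var[OF i]] .
  have "Var i * ?r = Var i * (\<Sum>j<length B. Poly_Mapping.single 0 (Poly_Mapping.lookup ?r (B ! j)) * Poly_Mapping.single (B ! j) 1)"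
    using rep_B[OF rS] by simp
  also have "\<dots> = (\<Sum>j<length B. Poly_Mapping.single 0 (Poly_Mapping.lookup ?r (B ! j)) * (Poly_Mapping.single (B ! j) 1 * Var i))"
    by (simp add: sum_distrib_left algebra_simps)
  finally have eq: "Var i * ?r = \<dots>" .
  have "NF (Var i * p) = NF (Var i * ?r)" using nf_mult_nf[OF Pn_Var[OF i] p] by simp
  also have "\<dots> = (\<Sum>j<length B. Poly_Mapping.single 0 (Poly_Mapping.lookup ?r (B ! j)) * NF (Poly_Mapping.single (B ! j) 1 * Var i))"
    unfolding eq using BPV by (subst nf_sum) (auto intro: Pn_mult Pn_single0 simp: nf_smult)
  finally have "Poly_Mapping.lookup (NF (Var i * p)) (B ! k) =
      (\<Sum>j<length B. Poly_Mapping.lookup ?r (B ! j) * Poly_Mapping.lookup (NF (Poly_Mapping.single (B ! j) 1 * Var i)) (B ! k))"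
    by (simp add: lookup_sum lookup_single0_mult)
  then show "(mult_mat n lt1 I i *\<^sub>v crd p) $ k = crd (Var i * p) $ k"
    using k by (simp add: mult_mat_alt crd_def scalar_prod_def mult.commute atLeast0LessThan)
qed

lemma pow_crd: assumes "1 \<le> n" "p \<in> Pn n"
  shows "(mult_mat n lt1 I 1 ^\<^sub>m j) *\<^sub>v crd p = crd (Var 1 ^ j * p)"
  using assms(2)
proof (induction j arbitrary: p)
  case 0
  have "1\<^sub>m (length B) *\<^sub>v crd p = crd p" using crd_carrier by simp
  then show ?case by (simp add: mult_mat_alt)
next
  case (Suc j)
  have "mult_mat n lt1 I 1 ^\<^sub>m Suc j *\<^sub>v crd p = (mult_mat n lt1 I 1 ^\<^sub>m j * mult_mat n lt1 I 1) *\<^sub>v crd p" by simp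
  also have "\<dots> = mult_mat n lt1 I 1 ^\<^sub>m j *\<^sub>v (mult_mat n lt1 I 1 *\<^sub>v crd p)"
    by (rule assoc_mult_mat_vec[OF pow_carrier_mat[OF mult_mat_carrier] mult_mat_carrier crd_carrier])
  also have "\<dots> = mult_mat n lt1 I 1 ^\<^sub>m j *\<^sub>v crd (Var 1 * p)"
    using mult_mat_crd[of 1 p] assms(1) Suc.prems by simp
  also have "\<dots> = crd (Var 1 ^ j * (Var 1 * p))"
    using Suc.IH[of "Var 1 * p"] Pn_mult[OF Pn_Var Suc.prems] assms(1) by simp
  finally show ?case by (simp add: algebra_simps)
qed

lemma crd_1: assumes "0 < card S" shows "crd 1 = unit_vec (length B) 0"
proof -
  have "NF 1 = 1" using zero_in_S[OF assms] by (intro nf_id) auto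
  moreover have "B ! k = 0 \<longleftrightarrow> k = 0" if "k < length B" for k
    using B0[OF assms] nth_eq_iff_index_eq[OF B_distinct that, of 0] that assms B_length by auto
  ultimately show ?thesis unfolding crd_def unit_vec_def by (intro eq_vecI) (auto simp: lookup_one)
qed

definition L :: "'a vec \<Rightarrow> 'a mpoly \<Rightarrow> 'a" where
  "L w p = (\<Sum>k<length B. w $ k * Poly_Mapping.lookup (NF p) (B ! k))"

lemma L_crd: "dim_vec w = length B \<Longrightarrow> w \<bullet> crd p = L w p"
  unfolding L_def scalar_prod_def crd_def by (simp add: atLeast0LessThan)

lemma L_add: "p \<in> Pn n \<Longrightarrow> q \<in> Pn n \<Longrightarrow> L w (p + q) = L w p + L w q"
  unfolding L_def by (simp add: nf_add lookup_add ring_distribs sum.distrib)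

lemma L_smult: "p \<in> Pn n \<Longrightarrow> L w (Poly_Mapping.single 0 c * p) = c * L w p"
  unfolding L_def by (simp only: nf_smult lookup_single0_mult) (simp add: sum_distrib_left mult.left_commute)

lemma L_I: "a \<in> I \<Longrightarrow> L w a = 0"
  unfolding L_def by (simp add: nf_I)

lemma L_0: "L w 0 = 0"
  using L_I[OF I_0[OF ideal]] .

lemma L_sum: "(\<And>x. x \<in> A \<Longrightarrow> f x \<in> Pn n) \<Longrightarrow> L w (sum f A) = (\<Sum>x\<in>A. L w (f x))"
proof (induction A rule: infinite_finite_induct)
  case (infinite A) then show ?case using L_0 by simp
next
  case empty then show ?case using L_0 by simp
next
  case (insert x F) then show ?case by (simp add: L_add Pn_sum)
qed

lemma L_diff: "p \<in> Pn n \<Longrightarrow> q \<in> Pn n \<Longrightarrow> p - q \<in> I \<Longrightarrow> L w p = L w q"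
  using L_add[of "p - q" q w] L_I[of "p - q" w] Pn_diff by fastforce

end



interpretation phi: map_poly_inj_comm_ring_hom "Poly_Mapping.single (0::mono) :: 'a::comm_ring_1 \<Rightarrow> _"
  by unfold_locales (auto simp: mult_single single_add, metis lookup_single_eq lookup_zero)

lemma single0_ne: "c \<noteq> 0 \<Longrightarrow> Poly_Mapping.single 0 c \<noteq> (0 :: 'x::zero \<Rightarrow>\<^sub>0 'b::zero)"
  by (metis lookup_single_eq lookup_zero)

lemma Var_power: "Var v ^ k = (Poly_Mapping.single (Poly_Mapping.single v k) 1 :: 'a::comm_ring_1 mpoly)"
proof (induction k)
  case 0 then show ?case by simp
next
  case (Suc k)
  have "Var v ^ Suc k = Var v * Var v ^ k" by simp
  also have "\<dots> = Var v * (Poly_Mapping.single (Poly_Mapping.single v k) 1 :: 'a mpoly)" using Suc by simp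
  also have "\<dots> = (Poly_Mapping.single (Poly_Mapping.single v (Suc k)) 1 :: 'a mpoly)"
    unfolding Var_def mult_single by (simp add: single_add[symmetric])
  finally show ?case .
qed

lemma single_X: "Poly_Mapping.single (Poly_Mapping.single 1 k) c = Poly_Mapping.single 0 c * (Var 1 ^ k :: 'a::comm_ring_1 mpoly)"
  by (simp add: Var_power mult_single)

lemma uni_alt: "uni P = (\<Sum>k\<le>degree P. Poly_Mapping.single 0 (coeff P k) * Var 1 ^ k)"
  unfolding uni_def single_X by (rule refl)

lemma uni_poly: "uni P = poly (map_poly (Poly_Mapping.single 0) P) (Var 1)"
  unfolding uni_alt poly_altdef
  by (simp add: degree_map_poly single0_ne coeff_map_poly)

lemma uni_mult: "uni (P * Q) = uni P * uni Q"
  unfolding uni_poly by (simp add: phi.hom_mult)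

lemma uni_add: "uni (P + Q) = uni P + uni Q"
  unfolding uni_poly by (simp add: phi.hom_add)

lemma uni_1: "uni 1 = 1"
  unfolding uni_poly by simp

lemma uni_X: "uni [:0, 1:] = Var 1"
  unfolding uni_poly by simp

lemma uni_const: "uni [:c:] = Poly_Mapping.single 0 c"
  unfolding uni_alt by simp

lemma uni_N: assumes "degree P < N"
  shows "uni P = (\<Sum>k<N. Poly_Mapping.single 0 (coeff P k) * Var 1 ^ k)"
  unfolding uni_alt
  by (rule sum.mono_neutral_left) (use assms in \<open>auto simp: coeff_eq_0\<close>)

lemma sum_deg_N: fixes P :: "'a::comm_ring_1 poly" assumes "degree P < N"
  shows "(\<Sum>k\<le>degree P. coeff P k * u k) = (\<Sum>k<N. coeff P k * u k)"
  by (rule sum.mono_neutral_left) (use assms in \<open>auto simp: coeff_eq_0\<close>)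

lemma lookup_uni: "Poly_Mapping.lookup (uni P) m = (if m = Poly_Mapping.single 1 (Poly_Mapping.lookup m 1) then coeff P (Poly_Mapping.lookup m 1) else 0)"
proof -
  have "Poly_Mapping.lookup (uni P) m = (\<Sum>k\<le>degree P. if Poly_Mapping.single 1 k = m then coeff P k else 0)"
    unfolding uni_def by (simp add: lookup_sum lookup_single when_def)
  also have "\<dots> = (if m = Poly_Mapping.single 1 (Poly_Mapping.lookup m 1) then coeff P (Poly_Mapping.lookup m 1) else 0)"
  proof (cases "m = Poly_Mapping.single 1 (Poly_Mapping.lookup m 1)")
    case True
    have iff: "Poly_Mapping.single 1 k = m \<longleftrightarrow> k = Poly_Mapping.lookup m 1" for k
    proof
      assume "Poly_Mapping.single 1 k = m"
      then show "k = Poly_Mapping.lookup m 1" by (metis lookup_single_eq)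
    next
      assume "k = Poly_Mapping.lookup m 1"
      then show "Poly_Mapping.single 1 k = m" using True by metis
    qed
    have "(\<Sum>k\<le>degree P. if Poly_Mapping.single 1 k = m then coeff P k else 0)
        = (\<Sum>k\<le>degree P. if k = Poly_Mapping.lookup m 1 then coeff P k else 0)"
      by (simp only: iff)
    also have "\<dots> = coeff P (Poly_Mapping.lookup m 1)"
      by (auto simp: coeff_eq_0)
    finally show ?thesis using True by simp
  next
    case False
    have "Poly_Mapping.single 1 k \<noteq> m" for k using False by (metis lookup_single_eq)
    then show ?thesis using False by simp
  qed
  finally show ?thesis .
qed

lemma prod_single: "finite A \<Longrightarrow> (\<Prod>v\<in>A. Poly_Mapping.single (g v) 1) = (Poly_Mapping.single (\<Sum>v\<in>A. g v) 1 :: 'a::comm_ring_1 mpoly)"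
  by (induction A rule: finite_induct) (auto simp: mult_single)

lemma single_as_prod: "Poly_Mapping.single m 1 = (\<Prod>v\<in>Poly_Mapping.keys m. Var v ^ Poly_Mapping.lookup m v :: 'a::comm_ring_1 mpoly)"
  unfolding Var_power by (subst prod_single) (simp_all add: sum_single_keys)




definition vpoly :: "nat \<Rightarrow> (nat \<Rightarrow> 'a::zero) \<Rightarrow> 'a poly" where
  "vpoly N g = Poly (map g [0..<N])"

lemma coeff_vpoly: "coeff (vpoly N g) k = (if k < N then g k else 0)"
  by (simp add: vpoly_def nth_default_def)

lemma degree_vpoly: "0 < N \<Longrightarrow> degree (vpoly N g) < N"
proof -
  assume "0 < N"
  have "degree (vpoly N g) \<le> N - 1" by (rule degree_le) (auto simp: coeff_vpoly)
  then show ?thesis using \<open>0 < N\<close> by simp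
qed

lemma rec_zero:
  fixes u :: "nat \<Rightarrow> 'a::field"
  assumes P: "P \<noteq> 0" and rec: "\<forall>j. (\<Sum>k\<le>degree P. coeff P k * u (k + j)) = 0"
    and init: "\<forall>j<N. u j = 0" and deg: "degree P \<le> N"
  shows "u j = 0"
proof (induction j rule: less_induct)
  case (less j)
  show ?case
  proof (cases "j < N")
    case True then show ?thesis using init by simp
  next
    case False
    define e where "e = degree P"
    define j0 where "j0 = j - e"
    have je: "j = e + j0" using False deg by (simp add: e_def j0_def)
    have "0 = (\<Sum>k\<le>e. coeff P k * u (k + j0))" using rec by (simp add: e_def)
    also have "\<dots> = (\<Sum>k<e. coeff P k * u (k + j0)) + coeff P e * u (e + j0)"
      by (simp add: lessThan_Suc_atMost[symmetric])
    also have "(\<Sum>k<e. coeff P k * u (k + j0)) = 0"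
    proof (rule sum.neutral, rule ballI)
      fix k assume "k \<in> {..<e}"
      then have "k + j0 < j" using je by simp
      then show "coeff P k * u (k + j0) = 0" using less by simp
    qed
    finally have "coeff P e * u j = 0" using je by (simp add: add.commute)
    moreover have "coeff P e \<noteq> 0" using P by (simp add: e_def)
    ultimately show ?thesis by simp
  qed
qed

locale setup2 = setup1 n lt1 I for n lt1 and I :: "'a::field mpoly set" +
  fixes w :: "'a vec" and f :: "nat \<Rightarrow> 'a poly" and ft :: "'a poly" and d :: nat
  assumes n1: "1 \<le> n"
    and wdim: "dim_vec w = card (std_monos n lt1 I)"
    and gens: "\<forall>i\<in>{2..n}. Var i - uni (f i) \<in> I"
    and minp: "is_minpoly_seq (\<lambda>j. L w (Var 1 ^ j)) (2 * card (std_monos n lt1 I)) ft"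
    and ddef: "d = degree ft" and d0: "0 < d" and dD: "d < card (std_monos n lt1 I)"
begin

abbreviation "X \<equiv> (Var 1 :: 'a mpoly)"
abbreviation "a j \<equiv> L w (X ^ j)"
abbreviation "DD \<equiv> card S"

lemma XP: "X \<in> Pn n" using n1 by (intro Pn_Var) auto
lemma XkP: "X ^ k \<in> Pn n" using Pn_power[OF XP] .
lemma uniP: "uni P \<in> Pn n" using Pn_uni[OF n1] .

lemma ft_lc: "lead_coeff ft = 1" using minp by (simp add: is_minpoly_seq_def)
lemma ft0: "ft \<noteq> 0" using ft_lc by auto

lemma L_q_sum: assumes "q \<in> Pn n"
  shows "L w (q * (\<Sum>k<N. Poly_Mapping.single 0 (c k) * X ^ k)) = (\<Sum>k<N. c k * L w (q * X ^ k))"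
proof -
  have "q * (\<Sum>k<N. Poly_Mapping.single 0 (c k) * X ^ k) = (\<Sum>k<N. Poly_Mapping.single 0 (c k) * (q * X ^ k))"
    by (simp add: sum_distrib_left mult.left_commute)
  moreover have "\<And>k. Poly_Mapping.single 0 (c k) * (q * X ^ k) \<in> Pn n"
    using assms XkP by (intro Pn_mult Pn_single0)
  moreover have "\<And>k. q * X ^ k \<in> Pn n" using assms XkP by (intro Pn_mult)
  ultimately show ?thesis by (simp add: L_sum L_smult)
qed

lemma L_uni: assumes "q \<in> Pn n" "degree P < N"
  shows "L w (q * uni P) = (\<Sum>k<N. coeff P k * L w (q * X ^ k))"
  using L_q_sum[OF assms(1)] uni_N[OF assms(2)] by simp

lemma L_Xj_uni: assumes "degree P < N"
  shows "L w (X ^ j * uni P) = (\<Sum>k<N. coeff P k * a (k + j))"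
  using L_uni[OF XkP assms] by (simp add: power_add[symmetric] add.commute)

lemma L_Xj_uni': "L w (X ^ j * uni P) = (\<Sum>k\<le>degree P. coeff P k * a (k + j))"
  using L_Xj_uni[of P "Suc (degree P)" j] by (simp add: lessThan_Suc_atMost)

lemma annih_L: "annihilates (\<lambda>j. a j) N P \<longleftrightarrow> (\<forall>j. j + degree P < N \<longrightarrow> L w (X ^ j * uni P) = 0)"
  unfolding annihilates_def L_Xj_uni' ..

lemma minp_parts: "annihilates (\<lambda>j. a j) (2 * DD) ft"
   "\<And>Q. Q \<noteq> 0 \<Longrightarrow> annihilates (\<lambda>j. a j) (2 * DD) Q \<Longrightarrow> degree ft \<le> degree Q"
  using minp unfolding is_minpoly_seq_def by blast+

lemma b_init: "j + d < 2 * DD \<Longrightarrow> L w (X ^ j * uni ft) = 0"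
  using minp_parts(1) unfolding annih_L ddef by blast

lemma minimal: "Q \<noteq> 0 \<Longrightarrow> (\<forall>j. L w (X ^ j * uni Q) = 0) \<Longrightarrow> d \<le> degree Q"
  using minp_parts(2)[of Q] unfolding annih_L ddef by blast


lemma exP: "\<exists>P. P \<noteq> 0 \<and> degree P \<le> DD \<and> uni P \<in> I"
proof -
  let ?N = "length B"
  have NB: "?N = DD" using B_length .
  define c where "c i = vec (Suc ?N) (\<lambda>j. crd (X ^ j) $ i)" for i
  define M where "M = mat\<^sub>r (Suc ?N) (Suc ?N) (\<lambda>i. if i = ?N then 0\<^sub>v (Suc ?N) else c i)"
  have Mc: "M \<in> carrier_mat (Suc ?N) (Suc ?N)" by (simp add: M_def)
  have "det M = 0" unfolding M_def by (rule det_row_0) (auto simp: c_def)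
  then obtain v where v: "v \<in> carrier_vec (Suc ?N)" "v \<noteq> 0\<^sub>v (Suc ?N)" "M *\<^sub>v v = 0\<^sub>v (Suc ?N)"
    using det_0_iff_vec_prod_zero[OF Mc] by blast
  define P where "P = vpoly (Suc ?N) (\<lambda>j. v $ j)"
  have coP: "coeff P j = (if j < Suc ?N then v $ j else 0)" for j by (simp add: P_def coeff_vpoly)
  have degP: "degree P < Suc ?N" unfolding P_def by (rule degree_vpoly) simp
  have P0: "P \<noteq> 0"
  proof
    assume "P = 0"
    then have "v $ j = 0" if "j < Suc ?N" for j using coP[of j] that by simp
    then have "v = 0\<^sub>v (Suc ?N)" using v(1) by (intro eq_vecI) auto
    then show False using v(2) by simp
  qed
  have rows: "(\<Sum>j<Suc ?N. crd (X ^ j) $ i * v $ j) = 0" if i: "i < ?N" for i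
  proof -
    have "(M *\<^sub>v v) $ i = 0" using v(3) i by simp
    moreover have "(M *\<^sub>v v) $ i = c i \<bullet> v" using i by (simp add: M_def c_def)
    moreover have "c i \<bullet> v = (\<Sum>j<Suc ?N. crd (X ^ j) $ i * v $ j)"
      using v(1) by (simp add: scalar_prod_def c_def atLeast0LessThan)
    ultimately show ?thesis by simp
  qed
  have nfX: "\<And>j. Poly_Mapping.single 0 (coeff P j) * X ^ j \<in> Pn n" using XkP by (intro Pn_mult Pn_single0)
  have "NF (uni P) = (\<Sum>j<Suc ?N. NF (Poly_Mapping.single 0 (coeff P j) * X ^ j))"
    unfolding uni_N[OF degP] by (rule nf_sum) (rule nfX)
  also have "\<dots> = (\<Sum>j<Suc ?N. Poly_Mapping.single 0 (coeff P j) * NF (X ^ j))"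
    by (rule sum.cong[OF refl], rule nf_smult[OF XkP])
  finally have "NF (uni P) = (\<Sum>j<Suc ?N. Poly_Mapping.single 0 (coeff P j) * NF (X ^ j))" .
  then have lk: "Poly_Mapping.lookup (NF (uni P)) (B ! i) = 0" if "i < ?N" for i
    using rows[OF that] that by (simp add: lookup_sum lookup_add lookup_single0_mult coP crd_def mult.commute)
  have "NF (uni P) = 0"
  proof -
    have "NF (uni P) = (\<Sum>j<length B. Poly_Mapping.single 0 (Poly_Mapping.lookup (NF (uni P)) (B ! j)) * Poly_Mapping.single (B ! j) 1)"
      using rep_B[OF nf_props(3)[OF uniP]] by simp
    also have "\<dots> = 0" using lk by simp
    finally show ?thesis .
  qed
  then have "uni P \<in> I" using nf_props(2)[OF uniP[of P]] by simp
  then show ?thesis using P0 degP NB by (intro exI[of _ P]) auto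
qed

lemma b_zero: "L w (X ^ j * uni ft) = 0"
proof -
  obtain P where P: "P \<noteq> 0" "degree P \<le> DD" "uni P \<in> I" using exP by blast
  define u where "u j = L w (X ^ j * uni ft)" for j
  have rec: "\<forall>j. (\<Sum>k\<le>degree P. coeff P k * u (k + j)) = 0"
  proof
    fix j
    have q: "X ^ j * uni ft \<in> Pn n" using XkP uniP by (rule Pn_mult)
    have "(\<Sum>k\<le>degree P. coeff P k * u (k + j)) = (\<Sum>k<Suc (degree P). coeff P k * L w ((X ^ j * uni ft) * X ^ k))"
      by (simp add: u_def lessThan_Suc_atMost power_add algebra_simps)
    also have "\<dots> = L w ((X ^ j * uni ft) * uni P)" using L_uni[OF q, of P "Suc (degree P)"] by simp
    also have "\<dots> = 0" using L_I I_mult[OF ideal q P(3)] by simp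
    finally show "(\<Sum>k\<le>degree P. coeff P k * u (k + j)) = 0" .
  qed
  have "u j = 0" by (rule rec_zero[OF P(1) rec, of "2 * DD - d"]) (use b_init dD P(2) in \<open>auto simp: u_def\<close>)
  then show ?thesis by (simp add: u_def)
qed

definition "Red p \<longleftrightarrow> p \<in> Pn n \<and> (\<exists>Q. p - uni Q \<in> I)"

lemma Red_add: assumes "Red p" "Red q" shows "Red (p + q)"
proof -
  obtain Q1 Q2 where Q: "p - uni Q1 \<in> I" "q - uni Q2 \<in> I" using assms unfolding Red_def by blast
  have eq: "(p + q) - uni (Q1 + Q2) = (p - uni Q1) + (q - uni Q2)" by (simp add: uni_add algebra_simps)
  have "(p + q) - uni (Q1 + Q2) \<in> I" by (subst eq) (rule I_add[OF ideal Q])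
  then show ?thesis using assms Pn_add unfolding Red_def by blast
qed

lemma Red_mult: assumes "Red p" "Red q" shows "Red (p * q)"
proof -
  obtain Q1 Q2 where Q: "p - uni Q1 \<in> I" "q - uni Q2 \<in> I" using assms unfolding Red_def by blast
  have pq: "p \<in> Pn n" "q \<in> Pn n" using assms unfolding Red_def by auto
  have eq: "p * q - uni (Q1 * Q2) = (p - uni Q1) * q + uni Q1 * (q - uni Q2)" by (simp add: uni_mult algebra_simps)
  have "p * q - uni (Q1 * Q2) \<in> I"
    by (subst eq) (rule I_add[OF ideal I_mult2[OF ideal pq(2) Q(1)] I_mult[OF ideal uniP Q(2)]])
  then show ?thesis using pq Pn_mult unfolding Red_def by blast
qed

lemma Red_single0: "Red (Poly_Mapping.single 0 c)"
  unfolding Red_def using Pn_single0 uni_const[of c] I_0[OF ideal] by (intro conjI exI[of _ "[:c:]"]) auto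

lemma Red_1: "Red 1"
  using Red_single0[of 1] by simp

lemma Red_Var: assumes "i \<in> {1..n}" shows "Red (Var i)"
proof (cases "i = 1")
  case True
  have e: "Var i - uni [:0, 1:] = (0 :: 'a mpoly)" unfolding uni_X True by simp
  have "Var i - uni [:0, 1:] \<in> I" unfolding e by (rule I_0[OF ideal])
  then show ?thesis unfolding Red_def using XP True by blast
next
  case False
  then have "i \<in> {2..n}" using assms by auto
  then show ?thesis unfolding Red_def using gens Pn_Var[OF assms] by blast
qed

lemma Red_power: "Red p \<Longrightarrow> Red (p ^ k)"
  by (induction k) (auto intro: Red_mult Red_1)

lemma Red_prod: "(\<And>x. x \<in> A \<Longrightarrow> Red (g x)) \<Longrightarrow> Red (prod g A)"
  by (induction A rule: infinite_finite_induct) (auto intro: Red_mult Red_1)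

lemma Red_sum: "(\<And>x. x \<in> A \<Longrightarrow> Red (g x)) \<Longrightarrow> Red (sum g A)"
  by (induction A rule: infinite_finite_induct) (auto intro: Red_add Red_single0[of 0, simplified])

lemma Red_all: assumes "p \<in> Pn n" shows "Red p"
proof -
  have "Red (\<Sum>m\<in>Poly_Mapping.keys p. Poly_Mapping.single 0 (Poly_Mapping.lookup p m) * Poly_Mapping.single m 1)"
  proof (rule Red_sum, rule Red_mult[OF Red_single0])
    fix m assume "m \<in> Poly_Mapping.keys p"
    then have mk: "Poly_Mapping.keys m \<subseteq> {1..n}" using assms by (auto simp: Pn_def)
    show "Red (Poly_Mapping.single m 1)" unfolding single_as_prod
      using mk by (intro Red_prod Red_power Red_Var) auto
  qed
  then show ?thesis by (simp only: sum_single_keys')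
qed

lemma L_ft: assumes "r \<in> Pn n" shows "L w (r * uni ft) = 0"
proof -
  obtain Q where Q: "r - uni Q \<in> I" using Red_all[OF assms] unfolding Red_def by blast
  have "L w (r * uni ft) = L w (uni ft * uni Q)"
  proof (rule L_diff)
    show "r * uni ft \<in> Pn n" "uni ft * uni Q \<in> Pn n" using assms uniP by (auto intro: Pn_mult)
    have "r * uni ft - uni ft * uni Q = uni ft * (r - uni Q)" by (simp add: algebra_simps)
    then show "r * uni ft - uni ft * uni Q \<in> I" using I_mult[OF ideal uniP Q] by simp
  qed
  also have "\<dots> = (\<Sum>k<Suc (degree Q). coeff Q k * L w (uni ft * X ^ k))"
    by (rule L_uni[OF uniP]) simp
  also have "\<dots> = 0" using b_zero by (simp add: mult.commute)
  finally show ?thesis .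
qed


lemma hankel: assumes y: "y \<in> carrier_vec d" and h: "\<forall>j<d. (\<Sum>k<d. y $ k * a (k + j)) = 0"
  shows "y = 0\<^sub>v d"
proof -
  define Y where "Y = vpoly d (\<lambda>k. y $ k)"
  have coY: "coeff Y k = (if k < d then y $ k else 0)" for k by (simp add: Y_def coeff_vpoly)
  have degY: "degree Y < d" unfolding Y_def using d0 by (rule degree_vpoly)
  define u where "u j = L w (X ^ j * uni Y)" for j
  have u_eq: "u j = (\<Sum>k<d. y $ k * a (k + j))" for j
    unfolding u_def L_Xj_uni[OF degY] by (rule sum.cong) (simp_all add: coY)
  have rec: "\<forall>j. (\<Sum>k\<le>degree ft. coeff ft k * u (k + j)) = 0"
  proof
    fix j
    have q: "X ^ j * uni Y \<in> Pn n" using XkP uniP by (rule Pn_mult)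
    have "(\<Sum>k\<le>degree ft. coeff ft k * u (k + j)) = (\<Sum>k<Suc (degree ft). coeff ft k * L w ((X ^ j * uni Y) * X ^ k))"
      by (simp add: u_def lessThan_Suc_atMost power_add algebra_simps)
    also have "\<dots> = L w ((X ^ j * uni Y) * uni ft)" using L_uni[OF q, of ft "Suc (degree ft)"] by simp
    also have "\<dots> = 0" by (rule L_ft[OF q])
    finally show "(\<Sum>k\<le>degree ft. coeff ft k * u (k + j)) = 0" .
  qed
  have uz: "u j = 0" for j by (rule rec_zero[OF ft0 rec, of d]) (use h u_eq ddef in auto)
  have "Y = 0"
  proof (rule ccontr)
    assume "Y \<noteq> 0"
    then have "d \<le> degree Y" using minimal[OF \<open>Y \<noteq> 0\<close>] uz unfolding u_def by blast
    then show False using degY by simp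
  qed
  then have "y $ k = 0" if "k < d" for k using coY[of k] that by simp
  then show ?thesis using y by (intro eq_vecI) auto
qed

lemma degr: "degree (p mod ft) < d"
  using degree_mod_less'[OF ft0, of p] d0 ddef by (cases "p mod ft = 0") auto

lemma sol_exists: assumes i: "i \<in> {2..n}"
  shows "L w (X ^ j * Var i) = (\<Sum>k<d. coeff (f i mod ft) k * a (k + j))"
proof -
  let ?q = "f i div ft" and ?r = "f i mod ft"
  have iP: "Var i \<in> Pn n" using i by (intro Pn_Var) auto
  have "L w (X ^ j * Var i) = L w (X ^ j * uni (f i))"
  proof (rule L_diff)
    show "X ^ j * Var i \<in> Pn n" "X ^ j * uni (f i) \<in> Pn n" using XkP iP uniP by (auto intro: Pn_mult)
    have "X ^ j * Var i - X ^ j * uni (f i) = X ^ j * (Var i - uni (f i))" by (simp add: algebra_simps)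
    then show "X ^ j * Var i - X ^ j * uni (f i) \<in> I" using I_mult[OF ideal XkP] gens i by simp
  qed
  also have "uni (f i) = uni ?q * uni ft + uni ?r"
  proof -
    have "uni (f i) = uni (?q * ft + ?r)" by simp
    also have "\<dots> = uni ?q * uni ft + uni ?r" by (simp only: uni_add uni_mult)
    finally show ?thesis .
  qed
  also have "X ^ j * (uni ?q * uni ft + uni ?r) = (X ^ j * uni ?q) * uni ft + X ^ j * uni ?r"
    by (simp add: algebra_simps)
  also have "L w ((X ^ j * uni ?q) * uni ft + X ^ j * uni ?r) = L w ((X ^ j * uni ?q) * uni ft) + L w (X ^ j * uni ?r)"
    using XkP uniP by (intro L_add Pn_mult)
  also have "L w ((X ^ j * uni ?q) * uni ft) = 0" using XkP uniP by (intro L_ft Pn_mult)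
  also have "L w (X ^ j * uni ?r) = (\<Sum>k<d. coeff ?r k * a (k + j))" by (rule L_Xj_uni[OF degr])
  finally show ?thesis by simp
qed

lemma DD_pos: "0 < DD" using d0 dD by simp

lemma mat_a: "w \<bullet> ((mult_mat n lt1 I 1 ^\<^sub>m j) *\<^sub>v unit_vec DD 0) = a j"
proof -
  have "unit_vec DD 0 = crd 1" using crd_1[OF DD_pos] B_length by simp
  then have "(mult_mat n lt1 I 1 ^\<^sub>m j) *\<^sub>v unit_vec DD 0 = crd (X ^ j * 1)"
    using pow_crd[OF n1 Pn_one] by simp
  then show ?thesis using L_crd wdim B_length by simp
qed

lemma mat_s: assumes i: "i \<in> {1..n}"
  shows "w \<bullet> ((mult_mat n lt1 I 1 ^\<^sub>m j * mult_mat n lt1 I i) *\<^sub>v unit_vec DD 0) = L w (X ^ j * Var i)"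
proof -
  have u: "unit_vec DD 0 = crd 1" using crd_1[OF DD_pos] B_length by simp
  have "(mult_mat n lt1 I 1 ^\<^sub>m j * mult_mat n lt1 I i) *\<^sub>v crd 1 = mult_mat n lt1 I 1 ^\<^sub>m j *\<^sub>v (mult_mat n lt1 I i *\<^sub>v crd 1)"
    by (rule assoc_mult_mat_vec[OF pow_carrier_mat[OF mult_mat_carrier] mult_mat_carrier crd_carrier])
  also have "mult_mat n lt1 I i *\<^sub>v crd 1 = crd (Var i * 1)" using mult_mat_crd[OF i Pn_one] .
  also have "mult_mat n lt1 I 1 ^\<^sub>m j *\<^sub>v crd (Var i * 1) = crd (X ^ j * (Var i * 1))"
    using pow_crd[OF n1] Pn_Var[OF i] by simp
  finally show ?thesis using u L_crd wdim B_length by simp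
qed

end



lemma single_eq_0_iff: "Poly_Mapping.single k v = 0 \<longleftrightarrow> v = 0"
  by (metis lookup_single_eq lookup_zero single_zero)

lemma mdvd_single:
  assumes "mdvd (Poly_Mapping.single a x) (Poly_Mapping.single b y)" "0 < x"
  shows "a = b \<and> x \<le> y"
proof -
  have "Poly_Mapping.lookup (Poly_Mapping.single a x) a \<le> Poly_Mapping.lookup (Poly_Mapping.single b y) a"
    using assms(1) unfolding mdvd_def by blast
  then have le: "x \<le> Poly_Mapping.lookup (Poly_Mapping.single b y) a" by simp
  show ?thesis
  proof (cases "a = b")
    case True then show ?thesis using le by simp
  next
    case False then have "Poly_Mapping.lookup (Poly_Mapping.single b y) a = 0" by (simp add: lookup_single)
    then show ?thesis using le assms(2) by simp
  qed
qed

lemma lookup_uni_single: "Poly_Mapping.lookup (uni P) (Poly_Mapping.single 1 k) = coeff P k"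
  unfolding lookup_uni by simp

lemma lookup_uni_single': "Poly_Mapping.lookup (uni P) (Poly_Mapping.single (Suc 0) k) = coeff P k"
  using lookup_uni_single by simp

lemma lookup_uni_other: assumes "\<forall>k. m \<noteq> Poly_Mapping.single 1 k" shows "Poly_Mapping.lookup (uni P) m = 0"
proof -
  have ne: "m \<noteq> Poly_Mapping.single 1 (Poly_Mapping.lookup m 1)" using assms by blast
  show ?thesis by (subst lookup_uni, simp only: if_not_P[OF ne])
qed

lemma keys_uni: assumes "m \<in> Poly_Mapping.keys (uni P)"
  shows "\<exists>k. m = Poly_Mapping.single 1 k \<and> k \<le> degree P \<and> coeff P k \<noteq> 0"
proof -
  have nz: "Poly_Mapping.lookup (uni P) m \<noteq> 0" using assms by (simp add: in_keys_iff)
  then obtain k where k: "m = Poly_Mapping.single 1 k" using lookup_uni_other by blast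
  then have "coeff P k \<noteq> 0" using nz by (simp add: lookup_uni_single')
  then show ?thesis using k le_degree by blast
qed

lemma uni_0: "uni 0 = 0"
  unfolding uni_poly by simp

lemma lex_11: "k < k' \<Longrightarrow> lex (Poly_Mapping.single 1 k) (Poly_Mapping.single 1 k')"
  unfolding lex_def by (intro exI[of _ 1]) (auto simp: lookup_single)

lemma lex_1i: "1 < i \<Longrightarrow> lex (Poly_Mapping.single 1 k) (Poly_Mapping.single i 1)"
  unfolding lex_def by (intro exI[of _ i]) (auto simp: lookup_single)

lemma lookup_Var: "Poly_Mapping.lookup (Var i :: 'a::comm_ring_1 mpoly) m = (if m = Poly_Mapping.single i 1 then 1 else 0)"
  by (simp add: Var_def lookup_single)

context setup2
begin

definition gi :: "nat \<Rightarrow> 'a mpoly" where "gi i = Var i - uni (f i mod ft)"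
definition GG :: "'a mpoly set" where "GG = insert (uni ft) (gi ` {2..n})"

lemma uft_top: "Poly_Mapping.lookup (uni ft) (Poly_Mapping.single 1 d) = 1"
  using ft_lc ddef by (simp add: lookup_uni_single lookup_uni_single')

lemma uft_ne: "uni ft \<noteq> 0"
  using uft_top by auto

lemma keys_uft: "m \<in> Poly_Mapping.keys (uni ft) \<Longrightarrow> \<exists>k\<le>d. m = Poly_Mapping.single 1 k"
  using keys_uni ddef by blast

lemma lm_uft: "lm lex (uni ft) = Poly_Mapping.single 1 d"
proof (rule lm_eq[OF sto_lex])
  show "Poly_Mapping.single 1 d \<in> Poly_Mapping.keys (uni ft)" using uft_top by (simp add: in_keys_iff)
  show "\<forall>m'\<in>Poly_Mapping.keys (uni ft). m' \<noteq> Poly_Mapping.single 1 d \<longrightarrow> lex m' (Poly_Mapping.single 1 d)"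
  proof (intro ballI impI)
    fix m' assume "m' \<in> Poly_Mapping.keys (uni ft)" "m' \<noteq> Poly_Mapping.single 1 d"
    then obtain k where k: "k \<le> d" "m' = Poly_Mapping.single 1 k" using keys_uft by blast
    then have "k \<noteq> d" using \<open>m' \<noteq> _\<close> by blast
    then have "k < d" using k(1) by simp
    then show "lex m' (Poly_Mapping.single 1 d)" using lex_11 k(2) by simp
  qed
qed

lemma lc_uft: "lc lex (uni ft) = 1"
  unfolding lc_def lm_uft using uft_top .

lemma gi_top: assumes "i \<in> {2..n}" shows "Poly_Mapping.lookup (gi i) (Poly_Mapping.single i 1) = 1"
proof -
  have "\<forall>k. Poly_Mapping.single i (1::nat) \<noteq> Poly_Mapping.single 1 k"
  proof
    fix k show "Poly_Mapping.single i (1::nat) \<noteq> Poly_Mapping.single 1 k"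
    proof
      assume eq: "Poly_Mapping.single i (1::nat) = Poly_Mapping.single 1 k"
      have "i \<noteq> 1" using assms by auto
      have "Poly_Mapping.lookup (Poly_Mapping.single i (1::nat)) i = Poly_Mapping.lookup (Poly_Mapping.single 1 k) i"
        by (simp only: eq)
      then show False using \<open>i \<noteq> 1\<close> by (simp add: lookup_single)
    qed
  qed
  then have "Poly_Mapping.lookup (uni (f i mod ft)) (Poly_Mapping.single i 1) = 0" by (rule lookup_uni_other)
  then show ?thesis by (simp add: gi_def lookup_minus lookup_Var)
qed

lemma gi_ne: assumes "i \<in> {2..n}" shows "gi i \<noteq> 0"
proof
  assume "gi i = 0"
  then have "Poly_Mapping.lookup (gi i) (Poly_Mapping.single i 1) = 0" by simp
  then show False using gi_top[OF assms] by simp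
qed

lemma keys_gi: assumes "m \<in> Poly_Mapping.keys (gi i)"
  shows "m = Poly_Mapping.single i 1 \<or> (\<exists>k<d. m = Poly_Mapping.single 1 k)"
proof (cases "m = Poly_Mapping.single i 1")
  case False
  then have "Poly_Mapping.lookup (uni (f i mod ft)) m \<noteq> 0"
    using assms by (simp add: gi_def in_keys_iff lookup_minus lookup_Var)
  then have "m \<in> Poly_Mapping.keys (uni (f i mod ft))" by (simp add: in_keys_iff)
  then obtain k where "m = Poly_Mapping.single 1 k" "k \<le> degree (f i mod ft)" using keys_uni by blast
  then have "k < d" using degr[of "f i"] by simp
  then show ?thesis using \<open>m = Poly_Mapping.single 1 k\<close> by blast
qed simp

lemma lm_gi: assumes i: "i \<in> {2..n}" shows "lm lex (gi i) = Poly_Mapping.single i 1"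
proof (rule lm_eq[OF sto_lex])
  show "Poly_Mapping.single i 1 \<in> Poly_Mapping.keys (gi i)" using gi_top[OF i] by (simp add: in_keys_iff)
  show "\<forall>m'\<in>Poly_Mapping.keys (gi i). m' \<noteq> Poly_Mapping.single i 1 \<longrightarrow> lex m' (Poly_Mapping.single i 1)"
  proof (intro ballI impI)
    fix m' assume m': "m' \<in> Poly_Mapping.keys (gi i)" "m' \<noteq> Poly_Mapping.single i 1"
    then obtain k where k: "m' = Poly_Mapping.single 1 k" using keys_gi by blast
    have "1 < i" using i by simp
    show "lex m' (Poly_Mapping.single i 1)" unfolding k by (rule lex_1i[OF \<open>1 < i\<close>])
  qed
qed

lemma lc_gi: "i \<in> {2..n} \<Longrightarrow> lc lex (gi i) = 1"
  unfolding lc_def using lm_gi gi_top by simp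

lemma uni_fi: "uni (f i) = uni (f i div ft) * uni ft + uni (f i mod ft)"
proof -
  have "uni (f i) = uni ((f i div ft) * ft + f i mod ft)" by simp
  also have "\<dots> = uni (f i div ft) * uni ft + uni (f i mod ft)" by (simp only: uni_add uni_mult)
  finally show ?thesis .
qed

lemma gi_in: assumes i: "i \<in> {2..n}" shows "gi i \<in> ideal_add n I (uni ft)"
proof -
  have eq: "gi i = (Var i - uni (f i)) + uni (f i div ft) * uni ft" unfolding gi_def uni_fi by simp
  have "Var i - uni (f i) \<in> I" using gens i by blast
  then show ?thesis unfolding ideal_add_def
    by (intro CollectI exI[of _ "Var i - uni (f i)"] exI[of _ "uni (f i div ft)"]) (use eq uniP in blast)
qed

lemma uft_in: "uni ft \<in> ideal_add n I (uni ft)"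
  unfolding ideal_add_def using I_0[OF ideal] Pn_one by (intro CollectI exI[of _ 0] exI[of _ 1]) auto

lemma ideal_add_Pn: "h \<in> ideal_add n I (uni ft) \<Longrightarrow> h \<in> Pn n"
proof -
  assume "h \<in> ideal_add n I (uni ft)"
  then obtain a q where h: "h = a + q * uni ft" "a \<in> I" "q \<in> Pn n" unfolding ideal_add_def by blast
  show "h \<in> Pn n" unfolding h(1) using I_sub[OF ideal h(2)] h(3) uniP by (intro Pn_add Pn_mult)
qed

lemma L_ideal_add: assumes "h \<in> ideal_add n I (uni ft)" shows "L w (X ^ j * h) = 0"
proof -
  obtain a q where h: "h = a + q * uni ft" "a \<in> I" "q \<in> Pn n" using assms unfolding ideal_add_def by blast
  have aP: "a \<in> Pn n" using I_sub[OF ideal h(2)] .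
  have "X ^ j * h = X ^ j * a + (X ^ j * q) * uni ft" by (simp add: h(1) algebra_simps)
  also have "L w \<dots> = L w (X ^ j * a) + L w ((X ^ j * q) * uni ft)"
    using XkP aP h(3) uniP by (intro L_add Pn_mult)
  also have "L w (X ^ j * a) = 0" using L_I I_mult[OF ideal XkP h(2)] by simp
  also have "L w ((X ^ j * q) * uni ft) = 0" using XkP h(3) by (intro L_ft Pn_mult)
  finally show ?thesis by simp
qed

lemma GB_prop: assumes hin: "h \<in> ideal_add n I (uni ft)" and h0: "h \<noteq> 0"
  shows "\<exists>g\<in>GG. g \<noteq> 0 \<and> mdvd (lm lex g) (lm lex h)"
proof -
  have hP: "h \<in> Pn n" using ideal_add_Pn[OF hin] .
  define m where "m = lm lex h"
  have mk: "m \<in> Poly_Mapping.keys h" and below: "\<forall>m'\<in>Poly_Mapping.keys h. m' \<noteq> m \<longrightarrow> lex m' m"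
    using lm_props[OF sto_lex h0] unfolding m_def by auto
  have mmono: "Poly_Mapping.keys m \<subseteq> {1..n}" using hP mk by (auto simp: Pn_def)
  show ?thesis
  proof (cases "\<exists>v\<in>{2..n}. 0 < Poly_Mapping.lookup m v")
    case True
    then obtain v where v: "v \<in> {2..n}" "0 < Poly_Mapping.lookup m v" by blast
    have "mdvd (Poly_Mapping.single v 1) m" unfolding mdvd_def using v(2) by (auto simp: lookup_single when_def)
    have gin: "gi v \<in> GG" unfolding GG_def using v(1) by blast
    have "gi v \<noteq> 0 \<and> mdvd (lm lex (gi v)) (lm lex h)"
      using gi_ne[OF v(1)] lm_gi[OF v(1)] \<open>mdvd (Poly_Mapping.single v 1) m\<close> m_def by simp
    then show ?thesis using gin by blast
  next
    case False
    define e where "e = Poly_Mapping.lookup m 1"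
    have m1: "m = Poly_Mapping.single 1 e"
    proof (rule poly_mapping_eqI)
      fix u show "Poly_Mapping.lookup m u = Poly_Mapping.lookup (Poly_Mapping.single 1 e) u"
      proof (cases "u = 1")
        case True then show ?thesis by (simp add: e_def)
      next
        case u1: False
        have "Poly_Mapping.lookup m u = 0"
        proof (rule ccontr)
          assume "Poly_Mapping.lookup m u \<noteq> 0"
          then have "u \<in> Poly_Mapping.keys m" by (simp add: in_keys_iff)
          then have "u \<in> {1..n}" using mmono by blast
          then have "u \<in> {2..n}" using u1 by auto
          then show False using False \<open>Poly_Mapping.lookup m u \<noteq> 0\<close> by auto
        qed
        then show ?thesis using u1 by (simp add: lookup_single)
      qed
    qed
    show ?thesis
    proof (cases "d \<le> e")
      case True
      have "mdvd (Poly_Mapping.single 1 d) m" unfolding mdvd_def m1 using True by (auto simp: lookup_single when_def)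
      then show ?thesis unfolding GG_def m_def[symmetric] using uft_ne lm_uft by auto
    next
      case False
      have allk: "\<exists>k<d. m' = Poly_Mapping.single 1 k" if m': "m' \<in> Poly_Mapping.keys h" for m'
      proof (cases "m' = m")
        case True
        have "e < d" using False by simp
        then show ?thesis using True m1 by blast
      next
        case ne: False
        then have "lex m' m" using below m' by blast
        then obtain k where k: "Poly_Mapping.lookup m' k < Poly_Mapping.lookup m k"
          "\<forall>j>k. Poly_Mapping.lookup m' j = Poly_Mapping.lookup m j" unfolding lex_def by blast
        have k1: "k = 1" using k(1) unfolding m1 by (auto simp: lookup_single when_def split: if_splits)
        have m'mono: "Poly_Mapping.keys m' \<subseteq> {1..n}" using hP m' by (auto simp: Pn_def)
        have "m' = Poly_Mapping.single 1 (Poly_Mapping.lookup m' 1)"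
        proof (rule poly_mapping_eqI)
          fix u show "Poly_Mapping.lookup m' u = Poly_Mapping.lookup (Poly_Mapping.single 1 (Poly_Mapping.lookup m' 1)) u"
          proof (cases "u = 0")
            case True
            then have "u \<notin> Poly_Mapping.keys m'" using m'mono by auto
            then show ?thesis using True by (simp add: in_keys_iff lookup_single)
          next
            case False
            show ?thesis
            proof (cases "u = 1")
              case False
              then have "u > 1" using \<open>u \<noteq> 0\<close> by simp
              then show ?thesis using k(2) k1 m1 False by (simp add: lookup_single)
            qed simp
          qed
        qed
        moreover have "Poly_Mapping.lookup m' 1 < d" using k(1) k1 m1 \<open>\<not> d \<le> e\<close> by (simp add: lookup_single)
        ultimately show ?thesis by blast
      qed
      define H where "H = vpoly d (\<lambda>e. Poly_Mapping.lookup h (Poly_Mapping.single 1 e))"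
      have coH: "coeff H k = (if k < d then Poly_Mapping.lookup h (Poly_Mapping.single 1 k) else 0)" for k
        by (simp add: H_def coeff_vpoly)
      have degH: "degree H < d" unfolding H_def using d0 by (rule degree_vpoly)
      have hH: "h = uni H"
      proof (rule poly_mapping_eqI)
        fix u show "Poly_Mapping.lookup h u = Poly_Mapping.lookup (uni H) u"
        proof (cases "\<exists>k. u = Poly_Mapping.single 1 k")
          case True
          then obtain k where u: "u = Poly_Mapping.single 1 k" by blast
          show ?thesis
          proof (cases "k < d")
            case True then show ?thesis using u by (simp add: lookup_uni_single lookup_uni_single' coH)
          next
            case False
            have "u \<notin> Poly_Mapping.keys h"
            proof
              assume "u \<in> Poly_Mapping.keys h"
              then obtain k' where "k' < d" "u = Poly_Mapping.single 1 k'" using allk by blast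
              then show False using u False by (metis lookup_single_eq)
            qed
            then show ?thesis using u False by (simp add: lookup_uni_single lookup_uni_single' coH in_keys_iff)
          qed
        next
          case False
          then have "u \<notin> Poly_Mapping.keys h" using allk by blast
          then show ?thesis using lookup_uni_other[of u H] False by (simp add: in_keys_iff)
        qed
      qed
      have H0: "H \<noteq> 0" using h0 hH uni_0 by auto
      have "\<forall>j. L w (X ^ j * uni H) = 0" using L_ideal_add[OF hin] hH by simp
      then have "d \<le> degree H" using minimal[OF H0] by blast
      then show ?thesis using degH by simp
    qed
  qed
qed

lemma reduced_prop:
  assumes g: "g \<in> GG" and g': "g' \<in> GG - {g}" and m: "m \<in> Poly_Mapping.keys g"
  shows "\<not> mdvd (lm lex g') m"
proof
  assume dv: "mdvd (lm lex g') m"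
  have g'cases: "(g' = uni ft) \<or> (\<exists>i'\<in>{2..n}. g' = gi i')" using g' unfolding GG_def by auto
  have gcases: "(g = uni ft) \<or> (\<exists>i\<in>{2..n}. g = gi i)" using g unfolding GG_def by auto
  show False
  proof (cases "g' = uni ft")
    case True
    then have dv1: "mdvd (Poly_Mapping.single 1 d) m" using dv lm_uft by simp
    have "g \<noteq> uni ft" using g' True by auto
    then obtain i where i: "i \<in> {2..n}" "g = gi i" using gcases by blast
    then have "m = Poly_Mapping.single i 1 \<or> (\<exists>k<d. m = Poly_Mapping.single 1 k)" using keys_gi m by blast
    then show False
    proof
      assume "m = Poly_Mapping.single i 1"
      then show False using mdvd_single[of 1 d i 1] dv1 d0 i(1) by auto
    next
      assume "\<exists>k<d. m = Poly_Mapping.single 1 k"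
      then obtain k where "k < d" "m = Poly_Mapping.single 1 k" by blast
      then show False using mdvd_single[of 1 d 1 k] dv1 d0 by auto
    qed
  next
    case False
    then obtain i' where i': "i' \<in> {2..n}" "g' = gi i'" using g'cases by blast
    then have dv1: "mdvd (Poly_Mapping.single i' 1) m" using dv lm_gi by simp
    have mform: "m = Poly_Mapping.single 1 k \<Longrightarrow> False" for k
      using mdvd_single[of i' 1 1 k] dv1 i'(1) by auto
    show False
    proof (cases "g = uni ft")
      case True
      then obtain k where "m = Poly_Mapping.single 1 k" using keys_uft m by blast
      then show False using mform by blast
    next
      case False
      then obtain i where i: "i \<in> {2..n}" "g = gi i" using gcases by blast
      have "i \<noteq> i'" using i i' g' by auto
      have "m = Poly_Mapping.single i 1 \<or> (\<exists>k<d. m = Poly_Mapping.single 1 k)" using keys_gi m i by blast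
      then show False
      proof
        assume "m = Poly_Mapping.single i 1"
        then show False using mdvd_single[of i' 1 i 1] dv1 \<open>i \<noteq> i'\<close> by auto
      qed (use mform in blast)
    qed
  qed
qed

lemma GG_reduced: "is_reduced_GB n lex (ideal_add n I (uni ft)) GG"
  unfolding is_reduced_GB_def is_GB_def
proof (intro conjI ballI impI)
  show "finite GG" by (simp add: GG_def)
  show "GG \<subseteq> ideal_add n I (uni ft)" unfolding GG_def using uft_in gi_in by auto
  show "\<And>h. h \<in> ideal_add n I (uni ft) \<Longrightarrow> h \<noteq> 0 \<Longrightarrow> \<exists>g\<in>GG. g \<noteq> 0 \<and> mdvd (lm lex g) (lm lex h)"
    using GB_prop by blast
  show "0 \<notin> GG" unfolding GG_def using uft_ne gi_ne by auto
  show "\<And>g. g \<in> GG \<Longrightarrow> lc lex g = 1" unfolding GG_def using lc_uft lc_gi by auto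
  show "\<And>g g' m. g \<in> GG \<Longrightarrow> g' \<in> GG - {g} \<Longrightarrow> m \<in> Poly_Mapping.keys g \<Longrightarrow> \<not> mdvd (lm lex g') m"
    by (rule reduced_prop)
qed

end



context setup1
begin

lemma mat_a1: assumes n1: "1 \<le> n" and pos: "0 < card S" and wd: "dim_vec w = card S"
  shows "w \<bullet> ((mult_mat n lt1 I 1 ^\<^sub>m j) *\<^sub>v unit_vec (card S) 0) = L w (Var 1 ^ j)"
proof -
  have "unit_vec (card S) 0 = crd 1" using crd_1[OF pos] B_length by simp
  then have "(mult_mat n lt1 I 1 ^\<^sub>m j) *\<^sub>v unit_vec (card S) 0 = crd (Var 1 ^ j * 1)"
    using pow_crd[OF n1 Pn_one] by simp
  then show ?thesis using L_crd wd B_length by simp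
qed

end

context setup2
begin

lemma main_i: assumes i: "i \<in> {2..n}"
  shows "(\<exists>!c. c \<in> carrier_vec d \<and> (\<forall>j<d. L w (X ^ j * Var i) = (\<Sum>k<d. c $ k * a (k + j)))) \<and>
    (\<forall>c. c \<in> carrier_vec d \<and> (\<forall>j<d. L w (X ^ j * Var i) = (\<Sum>k<d. c $ k * a (k + j))) \<longrightarrow>
       (\<exists>G. is_reduced_GB n lex (ideal_add n I (uni ft)) G \<and>
          Var i - (\<Sum>k<d. Poly_Mapping.single (Poly_Mapping.single 1 k) (c $ k)) \<in> G))"
proof -
  let ?r = "f i mod ft"
  define c0 where "c0 = vec d (\<lambda>k. coeff ?r k)"
  have c0c: "c0 \<in> carrier_vec d" by (simp add: c0_def)
  have c0sol: "\<forall>j<d. L w (X ^ j * Var i) = (\<Sum>k<d. c0 $ k * a (k + j))"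
  proof (intro allI impI)
    fix j assume "j < d"
    have "(\<Sum>k<d. c0 $ k * a (k + j)) = (\<Sum>k<d. coeff ?r k * a (k + j))"
      by (rule sum.cong) (simp_all add: c0_def)
    then show "L w (X ^ j * Var i) = (\<Sum>k<d. c0 $ k * a (k + j))" using sol_exists[OF i, of j] by simp
  qed
  have uniq: "c = c0" if c: "c \<in> carrier_vec d" "\<forall>j<d. L w (X ^ j * Var i) = (\<Sum>k<d. c $ k * a (k + j))" for c
  proof -
    have "c - c0 = 0\<^sub>v d"
    proof (rule hankel)
      show "c - c0 \<in> carrier_vec d" using c(1) c0c by simp
      show "\<forall>j<d. (\<Sum>k<d. (c - c0) $ k * a (k + j)) = 0"
      proof (intro allI impI)
        fix j assume "j < d"
        have "(\<Sum>k<d. (c - c0) $ k * a (k + j)) = (\<Sum>k<d. c $ k * a (k + j) - c0 $ k * a (k + j))"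
          by (rule sum.cong) (use c(1) c0c in \<open>simp_all add: left_diff_distrib\<close>)
        also have "\<dots> = (\<Sum>k<d. c $ k * a (k + j)) - (\<Sum>k<d. c0 $ k * a (k + j))"
          by (rule sum_subtractf)
        also have "\<dots> = 0" using c(2) c0sol \<open>j < d\<close> by simp
        finally show "(\<Sum>k<d. (c - c0) $ k * a (k + j)) = 0" .
      qed
    qed
    then have "c $ k = c0 $ k" if "k < d" for k
    proof -
      have "(c - c0) $ k = 0" using \<open>c - c0 = 0\<^sub>v d\<close> that by simp
      then show ?thesis using that c(1) c0c by simp
    qed
    then show "c = c0" using c(1) c0c by (intro eq_vecI) auto
  qed
  have Gpart: "\<exists>G. is_reduced_GB n lex (ideal_add n I (uni ft)) G \<and>
          Var i - (\<Sum>k<d. Poly_Mapping.single (Poly_Mapping.single 1 k) (c0 $ k)) \<in> G"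
  proof (intro exI conjI)
    show "is_reduced_GB n lex (ideal_add n I (uni ft)) GG" by (rule GG_reduced)
    have "(\<Sum>k<d. Poly_Mapping.single (Poly_Mapping.single 1 k) (c0 $ k)) = (\<Sum>k<d. Poly_Mapping.single 0 (coeff ?r k) * X ^ k)"
      by (rule sum.cong[OF refl]) (simp only: single_X, simp add: c0_def)
    also have "\<dots> = uni ?r" by (rule uni_N[OF degr, symmetric])
    finally have "Var i - (\<Sum>k<d. Poly_Mapping.single (Poly_Mapping.single 1 k) (c0 $ k)) = gi i"
      by (simp add: gi_def)
    then show "Var i - (\<Sum>k<d. Poly_Mapping.single (Poly_Mapping.single 1 k) (c0 $ k)) \<in> GG"
      unfolding GG_def using i by auto
  qed
  show ?thesis
  proof
    show "\<exists>!c. c \<in> carrier_vec d \<and> (\<forall>j<d. L w (X ^ j * Var i) = (\<Sum>k<d. c $ k * a (k + j)))"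
      using c0c c0sol uniq by blast
    show "\<forall>c. c \<in> carrier_vec d \<and> (\<forall>j<d. L w (X ^ j * Var i) = (\<Sum>k<d. c $ k * a (k + j))) \<longrightarrow>
       (\<exists>G. is_reduced_GB n lex (ideal_add n I (uni ft)) G \<and>
          Var i - (\<Sum>k<d. Poly_Mapping.single (Poly_Mapping.single 1 k) (c $ k)) \<in> G)"
      using uniq Gpart by blast
  qed
qed

end

theorem proposition3p6:
  fixes n D d :: nat and lt1 :: "mono \<Rightarrow> mono \<Rightarrow> bool"
    and I :: "'a::field mpoly set" and f :: "nat \<Rightarrow> 'a poly" and ft :: "'a poly"
    and w :: "'a vec"
  assumes "1 \<le> n"
    and "is_ideal n I"
    and "finite (std_monos n lt1 I)"
    and "is_reduced_GB n lex I (insert (uni (f 1)) {Var i - uni (f i) | i. i \<in> {2..n}})"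
    and "term_order n lt1"
    and "D = card (std_monos n lt1 I)"
    and "invertible_mat (mult_mat n lt1 I 1)"
    and "w \<in> carrier_vec D"
    and "is_minpoly_seq (\<lambda>i. w \<bullet> ((mult_mat n lt1 I 1 ^\<^sub>m i) *\<^sub>v unit_vec D 0)) (2 * D) ft"
    and "ft dvd f 1" and "d = Polynomial.degree ft" and "0 < d" and "d < D"
  shows "\<forall>i\<in>{2..n}.
    (\<exists>!c. c \<in> carrier_vec d \<and>
       (\<forall>j<d. w \<bullet> ((mult_mat n lt1 I 1 ^\<^sub>m j * mult_mat n lt1 I i) *\<^sub>v unit_vec D 0)
          = (\<Sum>k<d. c $ k * (w \<bullet> ((mult_mat n lt1 I 1 ^\<^sub>m (k + j)) *\<^sub>v unit_vec D 0))))) \<and>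
    (\<forall>c. c \<in> carrier_vec d \<and>
       (\<forall>j<d. w \<bullet> ((mult_mat n lt1 I 1 ^\<^sub>m j * mult_mat n lt1 I i) *\<^sub>v unit_vec D 0)
          = (\<Sum>k<d. c $ k * (w \<bullet> ((mult_mat n lt1 I 1 ^\<^sub>m (k + j)) *\<^sub>v unit_vec D 0))))
       \<longrightarrow> (\<exists>G. is_reduced_GB n lex (ideal_add n I (uni ft)) G \<and>
              Var i - (\<Sum>k<d. Poly_Mapping.single (Poly_Mapping.single 1 k) (c $ k)) \<in> G))"
proof -
  note A = assms
  interpret s1: setup1 n lt1 I
    by unfold_locales (use A(2,3,5) in auto)
  have wd: "dim_vec w = card (std_monos n lt1 I)" using A(6,8) by simp
  have pos: "0 < card (std_monos n lt1 I)" using A(6,12,13) by simp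
  have conv_a: "w \<bullet> ((mult_mat n lt1 I 1 ^\<^sub>m j) *\<^sub>v unit_vec D 0) = s1.L w (Var 1 ^ j)" for j
    using s1.mat_a1[OF A(1) pos wd] A(6) by simp
  have gensI: "\<forall>i\<in>{2..n}. Var i - uni (f i) \<in> I"
  proof
    fix i assume "i \<in> {2..n}"
    then have "Var i - uni (f i) \<in> insert (uni (f 1)) {Var i - uni (f i) | i. i \<in> {2..n}}" by blast
    then show "Var i - uni (f i) \<in> I" using A(4) unfolding is_reduced_GB_def is_GB_def by blast
  qed
  have minp': "is_minpoly_seq (\<lambda>j. s1.L w (Var 1 ^ j)) (2 * card (std_monos n lt1 I)) ft"
    using A(9) A(6) conv_a by simp
  interpret s2: setup2 n lt1 I w f ft d
    by unfold_locales (use A(1,11,12,13) A(6) wd gensI minp' in auto)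
  show ?thesis
  proof (intro ballI)
    fix i assume i: "i \<in> {2..n}"
    have i1: "i \<in> {1..n}" using i by auto
    have conv_s: "w \<bullet> ((mult_mat n lt1 I 1 ^\<^sub>m j * mult_mat n lt1 I i) *\<^sub>v unit_vec D 0) = s1.L w (Var 1 ^ j * Var i)" for j
      using s2.mat_s[OF i1, of j] A(6) by simp
    show "(\<exists>!c. c \<in> carrier_vec d \<and>
       (\<forall>j<d. w \<bullet> ((mult_mat n lt1 I 1 ^\<^sub>m j * mult_mat n lt1 I i) *\<^sub>v unit_vec D 0)
          = (\<Sum>k<d. c $ k * (w \<bullet> ((mult_mat n lt1 I 1 ^\<^sub>m (k + j)) *\<^sub>v unit_vec D 0))))) \<and>
    (\<forall>c. c \<in> carrier_vec d \<and>
       (\<forall>j<d. w \<bullet> ((mult_mat n lt1 I 1 ^\<^sub>m j * mult_mat n lt1 I i) *\<^sub>v unit_vec D 0)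
          = (\<Sum>k<d. c $ k * (w \<bullet> ((mult_mat n lt1 I 1 ^\<^sub>m (k + j)) *\<^sub>v unit_vec D 0))))
       \<longrightarrow> (\<exists>G. is_reduced_GB n lex (ideal_add n I (uni ft)) G \<and>
              Var i - (\<Sum>k<d. Poly_Mapping.single (Poly_Mapping.single 1 k) (c $ k)) \<in> G))"
      unfolding conv_s conv_a by (rule s2.main_i[OF i])
  qed
qed


end
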